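(* Let $A\in {\operatorname{\mathsf{TPD}}}_n(\mathbb{S}_{\max}^\vee)$, with $\gamma_i=a_{ii}$ for $i\in[n]$ ordered so that $\gamma_1\succeq\gamma_2\succeq\cdots\succeq\gamma_n$, and $B_k=\gamma_k I\ominus A$. Assume that $\gamma=\gamma_1$ is simple as an algebraic $\mathbb{S}_{\max}$-eigenvalue of $A$, that is $\gamma_1\succ \gamma_2$. Then, we have \[ v^{(1)}=(\gamma I \ominus A )^{\mathrm{adj}}_{:,1}=\gamma^{n-1} (\gamma^{-1}A)^*_{:,1}\enspace .\] Moreover $A v^{(1)}= \gamma v^{(1)}$. In particular, when $v^{(1)} \in (\mathbb{S}_{\max}^\vee)^n$, $v^{(1)}$ is the unique leading $\mathbb{S}_{\max}$-eigenvector (up to a multiplicative constant), and this is a strong $\mathbb{S}_{\max}$-eigenvector.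
   Context: $\mathbb{S}_{\max}$ is the symmetrized tropical semiring over a divisible totally ordered abelian group, with zero $\mathbf{0}$, unit $\mathbf{1}$, minus $\ominus$; $\mathbb{S}_{\max}^\vee$ is the set of signed elements (positive, negative or $\mathbf{0}$), and $a\,\nabla\, b$ iff $a\ominus b$ is balanced. $a\preceq b$ iff $b=a\oplus b$, and $a\prec b$ iff $a\preceq b$, $a\neq b$. $A\in{\operatorname{\mathsf{TPD}}}_n(\mathbb{S}_{\max}^\vee)$: $A$ symmetric with signed entries, $\mathbf{0}<a_{ii}$ and $a_{ij}^2<a_{ii}a_{jj}$ for $i\ne j$ (where $a<b$ iff $b\ominus a$ is positive). $\det$ is the signed determinant and $(M^{\mathrm{adj}})_{ij}=(\ominus\mathbf{1})^{i+j}\det M[\hat j,\hat i]$; $M_{:,j}$ is the $j$-th column. The Kleene star is $M^*=\bigoplus_{k\ge0}M^k$ (with $M^0=I$). An $\mathbb{S}_{\max}$-eigenvector for the eigenvalue $\gamma$ is a $v\in(\mathbb{S}_{\max}^\vee)^n\setminus\{\mathbf{0}\}$ with $Av\,\nabla\,\gamma v$; it is strong if $Av=\gamma v$; a leading eigenvector is one associated with the largest eigenvalue $\gamma_1$. The $\mathbb{S}_{\max}$-eigenvalues of $A$ are its diagonal entries. *)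

theory Defs
  imports Main "HOL-Combinatorics.Permutations"
begin

text \<open>The tropical (max-plus) convention: the value group 'g is written additively,
  tropical multiplication is the group addition, tropical addition is max.
  Elements of S_max: zero (i.e. -infinity), positive g, negative (ominus g), balanced g.\<close>

datatype 'g smax = SZero | Pos 'g | Neg 'g | Bal 'g

fun smod :: "'g::linordered_ab_group_add smax \<Rightarrow> 'g" where
  "smod SZero = 0" | "smod (Pos g) = g" | "smod (Neg g) = g" | "smod (Bal g) = g"

fun splus :: "'g::linordered_ab_group_add smax \<Rightarrow> 'g smax \<Rightarrow> 'g smax" where
  "splus SZero b = b"
| "splus a SZero = a"
| "splus a b = (if smod b < smod a then a else if smod a < smod b then b
                 else if a = b then a else Bal (smod a))"

fun stimes :: "'g::linordered_ab_group_add smax \<Rightarrow> 'g smax \<Rightarrow> 'g smax" where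
  "stimes SZero b = SZero"
| "stimes a SZero = SZero"
| "stimes (Pos a) (Pos b) = Pos (a + b)"
| "stimes (Pos a) (Neg b) = Neg (a + b)"
| "stimes (Neg a) (Pos b) = Neg (a + b)"
| "stimes (Neg a) (Neg b) = Pos (a + b)"
| "stimes (Bal a) b = Bal (a + smod b)"
| "stimes a (Bal b) = Bal (smod a + b)"

fun sminus :: "'g smax \<Rightarrow> 'g smax" where
  "sminus SZero = SZero" | "sminus (Pos g) = Neg g" | "sminus (Neg g) = Pos g"
| "sminus (Bal g) = Bal g"

fun sinv :: "'g::linordered_ab_group_add smax \<Rightarrow> 'g smax" where
  "sinv SZero = SZero" | "sinv (Pos g) = Pos (- g)" | "sinv (Neg g) = Neg (- g)"
| "sinv (Bal g) = Bal (- g)"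

instantiation smax :: (linordered_ab_group_add) comm_monoid_add
begin
definition zero_smax_def: "0 = SZero"
definition plus_smax_def: "a + b = splus a b"
instance
proof
  fix a b c :: "'a smax"
  show "a + b + c = a + (b + c)" unfolding plus_smax_def
    by (cases a; cases b; cases c) auto
  show "a + b = b + a" unfolding plus_smax_def
    by (cases a; cases b) auto
  show "0 + a = a" unfolding plus_smax_def zero_smax_def by simp
qed
end

instantiation smax :: (linordered_ab_group_add) comm_monoid_mult
begin
definition one_smax_def: "1 = Pos 0"
definition times_smax_def: "a * b = stimes a b"
instance
proof
  fix a b c :: "'a smax"
  show "a * b * c = a * (b * c)" unfolding times_smax_def
    by (cases a; cases b; cases c) (auto simp: add.assoc)
  show "a * b = b * a" unfolding times_smax_def
    by (cases a; cases b) (auto simp: add.commute)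
  show "1 * a = a" unfolding times_smax_def one_smax_def by (cases a) auto
qed
end

definition signed :: "'g smax \<Rightarrow> bool" where
  "signed a \<longleftrightarrow> (\<forall>g. a \<noteq> Bal g)"

definition balanced :: "'g smax \<Rightarrow> bool" where
  "balanced a \<longleftrightarrow> sminus a = a"

definition positive :: "'g smax \<Rightarrow> bool" where
  "positive a \<longleftrightarrow> (\<exists>g. a = Pos g)"

definition nabla :: "'g::linordered_ab_group_add smax \<Rightarrow> 'g smax \<Rightarrow> bool" where
  "nabla a b \<longleftrightarrow> balanced (a + sminus b)"

definition sless :: "'g::linordered_ab_group_add smax \<Rightarrow> 'g smax \<Rightarrow> bool" where
  "sless a b \<longleftrightarrow> positive (b + sminus a)"

definition spreceq :: "'g::linordered_ab_group_add smax \<Rightarrow> 'g smax \<Rightarrow> bool" where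
  "spreceq a b \<longleftrightarrow> b = a + b"

definition sprec :: "'g::linordered_ab_group_add smax \<Rightarrow> 'g smax \<Rightarrow> bool" where
  "sprec a b \<longleftrightarrow> spreceq a b \<and> a \<noteq> b"

section \<open>Matrices and vectors of size n (indices 0..n-1)\<close>

type_synonym 'g smat = "nat \<Rightarrow> nat \<Rightarrow> 'g smax"
type_synonym 'g svec = "nat \<Rightarrow> 'g smax"

definition TPD :: "nat \<Rightarrow> 'g::linordered_ab_group_add smat \<Rightarrow> bool" where
  "TPD n A \<longleftrightarrow>
     (\<forall>i<n. \<forall>j<n. A i j = A j i) \<and>
     (\<forall>i<n. \<forall>j<n. signed (A i j)) \<and>
     (\<forall>i<n. sless 0 (A i i)) \<and>
     (\<forall>i<n. \<forall>j<n. i \<noteq> j \<longrightarrow> sless ((A i j)^2) (A i i * A j j))"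

definition smat_id :: "'g::linordered_ab_group_add smat" where
  "smat_id i j = (if i = j then 1 else 0)"

definition smat_scale :: "'g::linordered_ab_group_add smax \<Rightarrow> 'g smat \<Rightarrow> 'g smat" where
  "smat_scale c M i j = c * M i j"

definition smat_minus :: "'g::linordered_ab_group_add smat \<Rightarrow> 'g smat \<Rightarrow> 'g smat" where
  "smat_minus M N i j = M i j + sminus (N i j)"

definition smat_mult :: "nat \<Rightarrow> 'g::linordered_ab_group_add smat \<Rightarrow> 'g smat \<Rightarrow> 'g smat" where
  "smat_mult n M N i j = (\<Sum>k<n. M i k * N k j)"

definition smat_vec :: "nat \<Rightarrow> 'g::linordered_ab_group_add smat \<Rightarrow> 'g svec \<Rightarrow> 'g svec" where
  "smat_vec n M v i = (\<Sum>j<n. M i j * v j)"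

fun smat_pow :: "nat \<Rightarrow> 'g::linordered_ab_group_add smat \<Rightarrow> nat \<Rightarrow> 'g smat" where
  "smat_pow n M 0 = smat_id"
| "smat_pow n M (Suc k) = smat_mult n (smat_pow n M k) M"

text \<open>Partial sums of the Kleene star series, and the Kleene star as the eventual value
  of these partial sums (the series converges iff its partial sums are eventually constant).\<close>
definition kleene_partial :: "nat \<Rightarrow> 'g::linordered_ab_group_add smat \<Rightarrow> nat \<Rightarrow> 'g smat" where
  "kleene_partial n M K i j = (\<Sum>k\<le>K. smat_pow n M k i j)"

definition kleene_converges :: "nat \<Rightarrow> 'g::linordered_ab_group_add smat \<Rightarrow> bool" where
  "kleene_converges n M \<longleftrightarrow> (\<exists>S K0. \<forall>K\<ge>K0. \<forall>i<n. \<forall>j<n. kleene_partial n M K i j = S i j)"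

definition kleene_star :: "nat \<Rightarrow> 'g::linordered_ab_group_add smat \<Rightarrow> 'g smat" where
  "kleene_star n M = (\<lambda>i j. THE s. \<exists>K0. \<forall>K\<ge>K0. kleene_partial n M K i j = s)"

definition ssign :: "(nat \<Rightarrow> nat) \<Rightarrow> 'g::linordered_ab_group_add smax" where
  "ssign \<sigma> = (if evenperm \<sigma> then 1 else sminus 1)"

definition sdet :: "nat \<Rightarrow> 'g::linordered_ab_group_add smat \<Rightarrow> 'g smax" where
  "sdet n M = (\<Sum>\<sigma> | \<sigma> permutes {..<n}. ssign \<sigma> * (\<Prod>i<n. M i (\<sigma> i)))"

definition skip :: "nat \<Rightarrow> nat \<Rightarrow> nat" where
  "skip r k = (if k < r then k else Suc k)"

definition minor :: "'g smat \<Rightarrow> nat \<Rightarrow> nat \<Rightarrow> 'g smat" where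
  "minor M r c = (\<lambda>k l. M (skip r k) (skip c l))"

definition sadj :: "nat \<Rightarrow> 'g::linordered_ab_group_add smat \<Rightarrow> 'g smat" where
  "sadj n M i j = (sminus 1) ^ (i + j) * sdet (n - 1) (minor M j i)"

definition is_svec :: "nat \<Rightarrow> 'g::linordered_ab_group_add svec \<Rightarrow> bool" where
  "is_svec n v \<longleftrightarrow> (\<forall>i<n. signed (v i)) \<and> (\<exists>i<n. v i \<noteq> 0)"

definition is_eigenvector :: "nat \<Rightarrow> 'g::linordered_ab_group_add smat \<Rightarrow> 'g smax \<Rightarrow> 'g svec \<Rightarrow> bool" where
  "is_eigenvector n A \<gamma> v \<longleftrightarrow> is_svec n v \<and> (\<forall>i<n. nabla (smat_vec n A v i) (\<gamma> * v i))"

definition is_strong_eigenvector :: "nat \<Rightarrow> 'g::linordered_ab_group_add smat \<Rightarrow> 'g smax \<Rightarrow> 'g svec \<Rightarrow> bool" where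
  "is_strong_eigenvector n A \<gamma> v \<longleftrightarrow> is_svec n v \<and> (\<forall>i<n. smat_vec n A v i = \<gamma> * v i)"

end

theory Submission
  imports Defs
begin

instance smax :: (linordered_ab_group_add) comm_semiring_1
proof
  fix a b c :: "'a smax"
  show "(a + b) * c = a * c + b * c" unfolding plus_smax_def times_smax_def
    by (cases a; cases b; cases c) (auto simp: add.commute)
  show "0 * a = 0" unfolding times_smax_def zero_smax_def by simp
  show "a * 0 = 0" unfolding times_smax_def zero_smax_def by (cases a) auto
  show "(0::'a smax) \<noteq> 1" unfolding zero_smax_def one_smax_def by simp
qed

definition mle :: "'g::linordered_ab_group_add smax \<Rightarrow> 'g smax \<Rightarrow> bool" where
  "mle a b \<longleftrightarrow> a = 0 \<or> (b \<noteq> 0 \<and> smod a \<le> smod b)"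

definition small :: "'g::linordered_ab_group_add smax \<Rightarrow> 'g smax \<Rightarrow> bool" where
  "small a b \<longleftrightarrow> a = 0 \<or> (b \<noteq> 0 \<and> smod a < smod b)"

lemmas sdefs = plus_smax_def times_smax_def zero_smax_def one_smax_def

lemma add_idem [simp]: "(a::'g::linordered_ab_group_add smax) + a = a"
  unfolding sdefs by (cases a) auto

lemma mult_eq_0_iff: "((a::'g::linordered_ab_group_add smax) * b = 0) \<longleftrightarrow> a = 0 \<or> b = 0"
  unfolding sdefs by (cases a; cases b) auto

lemma add_eq_0_iff: "((a::'g::linordered_ab_group_add smax) + b = 0) \<longleftrightarrow> a = 0 \<and> b = 0"
  unfolding sdefs by (cases a; cases b) (auto split: if_splits)

lemma smod_mult: "(a::'g::linordered_ab_group_add smax) \<noteq> 0 \<Longrightarrow> b \<noteq> 0 \<Longrightarrow> smod (a * b) = smod a + smod b"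
  unfolding sdefs by (cases a; cases b) auto

lemma smod_add_left: "(a::'g::linordered_ab_group_add smax) \<noteq> 0 \<Longrightarrow> b = 0 \<Longrightarrow> a + b = a"
  by simp

lemma small_absorb: "small t s \<Longrightarrow> s + t = (s::'g::linordered_ab_group_add smax)"
  unfolding small_def sdefs by (cases s; cases t) auto

lemma absorb_mle: "s + t = (s::'g::linordered_ab_group_add smax) \<Longrightarrow> mle t s"
  unfolding mle_def sdefs by (cases s; cases t) (auto split: if_splits)

lemma mle_refl [simp]: "mle a a" unfolding mle_def by auto
lemma mle_zero [simp]: "mle 0 a" unfolding mle_def by auto
lemma small_zero [simp]: "small 0 a" unfolding small_def by auto
lemma mle_zero2: "mle a 0 \<longleftrightarrow> a = 0" unfolding mle_def by auto
lemma small_zero2: "small a 0 \<longleftrightarrow> a = 0" unfolding small_def by auto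

lemma mle_trans: "mle a b \<Longrightarrow> mle b c \<Longrightarrow> mle a c"
  unfolding mle_def by auto
lemma mle_small_trans: "mle a b \<Longrightarrow> small b c \<Longrightarrow> small a c"
  unfolding mle_def small_def by auto
lemma small_mle_trans: "small a b \<Longrightarrow> mle b c \<Longrightarrow> small a c"
  unfolding mle_def small_def by auto
lemma small_imp_mle: "small a b \<Longrightarrow> mle a b"
  unfolding mle_def small_def by auto
lemma mle_total: "mle a b \<or> mle b a"
  unfolding mle_def by auto
lemma small_not_mle: "small a b \<Longrightarrow> a \<noteq> 0 \<Longrightarrow> \<not> mle b a"
  unfolding mle_def small_def by auto
lemma not_mle_small: "\<not> mle b a \<Longrightarrow> small a b"
  unfolding mle_def small_def by auto

lemma smod_add_cases: "(a::'g::linordered_ab_group_add smax) + b \<noteq> 0 \<Longrightarrow>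
   (a \<noteq> 0 \<and> smod (a + b) = smod a) \<or> (b \<noteq> 0 \<and> smod (a + b) = smod b)"
  unfolding sdefs by (cases a; cases b) auto

lemma mle_add1: "mle a (a + (b::'g::linordered_ab_group_add smax))"
  unfolding mle_def sdefs by (cases a; cases b) (auto split: if_splits)
lemma mle_add2: "mle b (a + (b::'g::linordered_ab_group_add smax))"
  unfolding mle_def sdefs by (cases a; cases b) (auto split: if_splits)

lemma mle_add_iff: "mle (a + b) (c::'g::linordered_ab_group_add smax) \<longleftrightarrow> mle a c \<and> mle b c"
proof
  assume "mle (a + b) c" then show "mle a c \<and> mle b c"
    using mle_add1 mle_add2 mle_trans by blast
next
  assume h: "mle a c \<and> mle b c"
  show "mle (a + b) c"
  proof (cases "a + b = 0")
    case False
    then show ?thesis using smod_add_cases[OF False] h unfolding mle_def by auto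
  qed (simp add: mle_def)
qed

lemma small_add: "small a s \<Longrightarrow> small b s \<Longrightarrow> small (a + b) (s::'g::linordered_ab_group_add smax)"
  unfolding small_def sdefs by (cases a; cases b; cases s) (auto split: if_splits)

lemma mle_add_ex: "mle a (b + (c::'g::linordered_ab_group_add smax)) \<Longrightarrow> a \<noteq> 0 \<Longrightarrow> mle a b \<or> mle a c"
  unfolding mle_def sdefs by (cases a; cases b; cases c) (auto split: if_splits)

lemma mle_mult: "mle a b \<Longrightarrow> mle c d \<Longrightarrow> mle (a * c) (b * (d::'g::linordered_ab_group_add smax))"
  unfolding mle_def by (auto simp: mult_eq_0_iff smod_mult add_mono)

lemma small_mult: "small a b \<Longrightarrow> mle c d \<Longrightarrow> small (a * c) (b * (d::'g::linordered_ab_group_add smax))"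
  unfolding mle_def small_def by (auto simp: mult_eq_0_iff smod_mult add_less_le_mono)

lemma small_mult1: "small a 1 \<Longrightarrow> small (a * c) (c::'g::linordered_ab_group_add smax)"
  using small_mult[of a 1 c c] by simp

lemma mle_mult1: "mle a 1 \<Longrightarrow> mle (a * c) (c::'g::linordered_ab_group_add smax)"
  using mle_mult[of a 1 c c] by simp

lemma split_small: "s = T + U \<Longrightarrow> small U s \<Longrightarrow> s = (T::'g::linordered_ab_group_add smax)"
  unfolding small_def sdefs by (cases T; cases U) (auto split: if_splits)

lemma sum_mle: "finite S \<Longrightarrow> x \<in> S \<Longrightarrow> mle (f x) (sum f S)"
proof (induction S rule: finite_induct)
  case (insert y S)
  then show ?case using mle_add1 mle_add2 mle_trans by (auto) blast
qed simp

lemma sum_mle_bound: "(\<And>x. x \<in> S \<Longrightarrow> mle (f x) c) \<Longrightarrow> mle (sum f S) c"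
proof (induction S rule: infinite_finite_induct)
  case (insert y S)
  then show ?case by (simp add: mle_add_iff)
qed (auto simp: zero_smax_def[symmetric])

lemma sum_small_bound: "(\<And>x. x \<in> S \<Longrightarrow> small (f x) c) \<Longrightarrow> small (sum f S) c"
proof (induction S rule: infinite_finite_induct)
  case (insert y S)
  then show ?case using small_add by (metis insert_iff sum.insert)
qed (auto simp: zero_smax_def[symmetric])

lemma sum_mle_ex: "mle a (sum f S) \<Longrightarrow> a \<noteq> 0 \<Longrightarrow> \<exists>x\<in>S. mle a (f x)"
proof (induction S rule: infinite_finite_induct)
  case (infinite A) then show ?case by (simp add: mle_zero2)
next
  case empty then show ?case by (simp add: mle_zero2)
next
  case (insert y S)
  then show ?case using mle_add_ex by fastforce
qed

lemma sum_absorb: "(\<And>x. x \<in> S \<Longrightarrow> s + f x = s) \<Longrightarrow> s + sum f S = (s::'g::linordered_ab_group_add smax)"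
proof (induction S rule: infinite_finite_induct)
  case (insert y S)
  have "s + sum f (insert y S) = (s + f y) + sum f S"
    using insert.hyps by (simp add: add.assoc)
  also have "\<dots> = s + sum f S" using insert.prems by simp
  also have "\<dots> = s" using insert.IH insert.prems by simp
  finally show ?case .
qed auto

lemma sum_summand: assumes "finite S" "x \<in> S"
  shows "sum f S + f x = (sum f S :: 'g::linordered_ab_group_add smax)"
proof -
  have e: "sum f S = f x + sum f (S - {x})" using sum.remove[OF assms] .
  have "sum f S + f x = (f x + f x) + sum f (S - {x})" unfolding e by (simp only: ac_simps)
  then show ?thesis using e by simp
qed

lemma sum_const_absorb: assumes "finite S " "x \<in> S" "f x = a" "(\<And>y. y \<in> S \<Longrightarrow> a + f y = a)"
  shows "sum f S = (a::'g::linordered_ab_group_add smax)"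
proof -
  have "sum f S = sum f S + f x" using sum_summand[OF assms(1,2), of f] by simp
  also have "\<dots> = a + sum f S" using assms(3) by (simp add: add.commute)
  also have "\<dots> = a" by (rule sum_absorb) (rule assms(4))
  finally show ?thesis .
qed

lemma sminus_add: "sminus (a + b) = sminus a + sminus (b::'g::linordered_ab_group_add smax)"
  unfolding sdefs by (cases a; cases b) auto
lemma sminus_mult: "sminus (a * b) = sminus a * (b::'g::linordered_ab_group_add smax)"
  unfolding sdefs by (cases a; cases b) auto
lemma sminus_mult2: "sminus (a * b) = a * sminus (b::'g::linordered_ab_group_add smax)"
  unfolding sdefs by (cases a; cases b) auto
lemma sminus_sminus [simp]: "sminus (sminus a) = a"
  by (cases a) auto
lemma sminus_zero [simp]: "sminus 0 = 0" unfolding zero_smax_def by simp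

lemma balanced_add: "balanced a \<Longrightarrow> balanced b \<Longrightarrow> balanced (a + b)"
  unfolding balanced_def by (simp add: sminus_add)
lemma balanced_mult: "balanced a \<Longrightarrow> balanced (c * a)"
  unfolding balanced_def by (simp add: sminus_mult2)

lemma nabla_refl: "nabla a (a::'g::linordered_ab_group_add smax)"
  unfolding nabla_def balanced_def by (simp add: sminus_add add.commute)

lemma nabla_sym: "nabla a b \<Longrightarrow> nabla b (a::'g::linordered_ab_group_add smax)"
  unfolding nabla_def balanced_def by (metis add.commute sminus_add sminus_sminus)

lemma nabla_mult: "nabla a b \<Longrightarrow> nabla (c * a) (c * (b::'g::linordered_ab_group_add smax))"
  unfolding nabla_def by (metis balanced_mult distrib_left sminus_mult2)

lemma nabla_signed_mle: "signed a \<Longrightarrow> a \<noteq> 0 \<Longrightarrow> nabla a r \<Longrightarrow> mle a (r::'g::linordered_ab_group_add smax)"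
  unfolding nabla_def balanced_def signed_def mle_def sdefs
  by (cases a; cases r) (auto split: if_splits)

lemma nabla_signed_eq: "signed a \<Longrightarrow> signed b \<Longrightarrow> nabla a b \<Longrightarrow> a = (b::'g::linordered_ab_group_add smax)"
  unfolding nabla_def balanced_def signed_def sdefs
  by (cases a; cases b) (auto split: if_splits)

lemma signed_mult: "signed a \<Longrightarrow> signed b \<Longrightarrow> signed (a * (b::'g::linordered_ab_group_add smax))"
  unfolding signed_def sdefs by (cases a; cases b) auto

lemma signed_Pos_mult: "signed (Pos g * b) \<Longrightarrow> signed (b::'g::linordered_ab_group_add smax)"
  unfolding signed_def sdefs by (cases b) auto


fun wprod :: "'g::linordered_ab_group_add smat \<Rightarrow> nat list \<Rightarrow> 'g smax" where
  "wprod M (x # y # zs) = M x y * wprod M (y # zs)"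
| "wprod M _ = 1"

definition walks :: "nat \<Rightarrow> nat \<Rightarrow> nat \<Rightarrow> nat \<Rightarrow> nat list set" where
  "walks n k i j = {xs. length xs = Suc k \<and> set xs \<subseteq> {..<n} \<and> hd xs = i \<and> last xs = j}"

lemma finite_walks: "finite (walks n k i j)"
proof -
  have "walks n k i j \<subseteq> {xs. set xs \<subseteq> {..<n} \<and> length xs = Suc k}"
    unfolding walks_def by auto
  moreover have "finite {xs. set xs \<subseteq> {..<n} \<and> length xs = Suc k}"
    by (rule finite_lists_length_eq) simp
  ultimately show ?thesis by (rule finite_subset)
qed

lemma wprod_snoc: "xs \<noteq> [] \<Longrightarrow> wprod M (xs @ [j]) = wprod M xs * M (last xs) j"
proof (induction xs)
  case Nil then show ?case by simp
next
  case (Cons a xs)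
  show ?case
  proof (cases xs)
    case Nil then show ?thesis by simp
  next
    case (Cons b ys)
    then show ?thesis using Cons.IH by (simp add: mult.assoc)
  qed
qed

lemma wprod_append: "wprod M (xs @ y # zs) = wprod M (xs @ [y]) * wprod M (y # zs)"
proof (induction xs)
  case Nil then show ?case by simp
next
  case (Cons a xs)
  then show ?case by (cases xs) (auto simp: mult.assoc)
qed

lemma walks0: "walks n 0 i j = (if i = j \<and> i < n then {[i]} else {})"
  unfolding walks_def by (auto simp: length_Suc_conv)

lemma walks_Suc: "walks n (Suc k) i j =
   (if j < n then (\<lambda>xs. xs @ [j]) ` {xs. length xs = Suc k \<and> set xs \<subseteq> {..<n} \<and> hd xs = i} else {})"
proof -
  { fix ys assume ys: "ys \<in> walks n (Suc k) i j"
    then obtain xs where "ys = xs @ [j]" and "length xs = Suc k"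
    proof -
      have "ys \<noteq> []" "length ys = Suc (Suc k)" using ys unfolding walks_def by auto
      moreover have "last ys = j" using ys unfolding walks_def by auto
      ultimately show ?thesis using that[of "butlast ys"] append_butlast_last_id[of ys] by simp
    qed
    with ys have "j < n \<and> ys \<in> (\<lambda>xs. xs @ [j]) ` {xs. length xs = Suc k \<and> set xs \<subseteq> {..<n} \<and> hd xs = i}"
      unfolding walks_def by (auto simp: hd_append) }
  moreover
  { fix xs assume "length xs = Suc k" "set xs \<subseteq> {..<n}" "hd xs = i" "j < n"
    then have "xs @ [j] \<in> walks n (Suc k) i j" unfolding walks_def by (auto simp: hd_append) }
  ultimately show ?thesis by (auto split: if_splits)
qed

lemma pow_walks:
  assumes "i < n" "j < n"
  shows "smat_pow n M k i j = (\<Sum>xs\<in>walks n k i j. wprod M xs)"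
  using assms(2)
proof (induction k arbitrary: j)
  case 0
  then show ?case using assms(1) by (simp add: walks0 smat_id_def)
next
  case (Suc k)
  let ?W = "{xs. length xs = Suc k \<and> set xs \<subseteq> {..<n} \<and> hd xs = i}"
  have finW: "finite ?W"
  proof -
    have "?W \<subseteq> {xs. set xs \<subseteq> {..<n} \<and> length xs = Suc k}" by auto
    moreover have "finite {xs. set xs \<subseteq> {..<n} \<and> length xs = Suc k}"
      by (rule finite_lists_length_eq) simp
    ultimately show ?thesis by (rule finite_subset)
  qed
  have lastW: "last ` ?W \<subseteq> {..<n}"
  proof
    fix y assume "y \<in> last ` ?W"
    then obtain xs where "xs \<in> ?W" "y = last xs" by auto
    then show "y \<in> {..<n}" by (metis (mono_tags, lifting) last_in_set list.size(3) mem_Collect_eq nat.distinct(1) subsetD)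
  qed
  have "smat_pow n M (Suc k) i j = (\<Sum>l<n. smat_pow n M k i l * M l j)"
    by (simp add: smat_mult_def)
  also have "\<dots> = (\<Sum>l<n. \<Sum>xs\<in>walks n k i l. wprod M xs * M l j)"
    using Suc.IH by (simp add: sum_distrib_right)
  also have "\<dots> = (\<Sum>l<n. \<Sum>xs\<in>{xs \<in> ?W. last xs = l}. wprod M (xs @ [j]))"
  proof (rule sum.cong[OF refl])
    fix l assume "l \<in> {..<n}"
    have e: "walks n k i l = {xs \<in> ?W. last xs = l}" unfolding walks_def by auto
    show "(\<Sum>xs\<in>walks n k i l. wprod M xs * M l j) = (\<Sum>xs\<in>{xs \<in> ?W. last xs = l}. wprod M (xs @ [j]))"
      unfolding e by (rule sum.cong[OF refl]) (subst wprod_snoc; auto)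
  qed
  also have "\<dots> = (\<Sum>xs\<in>?W. wprod M (xs @ [j]))"
    by (rule sum.group[OF finW finite_lessThan lastW])
  also have "\<dots> = (\<Sum>ys\<in>(\<lambda>xs. xs @ [j]) ` ?W. wprod M ys)"
    by (rule sum.reindex[symmetric, unfolded comp_def]) (auto simp: inj_on_def)
  also have "\<dots> = (\<Sum>xs\<in>walks n (Suc k) i j. wprod M xs)"
    using Suc.prems by (simp add: walks_Suc)
  finally show ?case .
qed


lemma smat_mult_assoc: "smat_mult n (smat_mult n X Y) Z = smat_mult n X (smat_mult n Y Z)"
proof (intro ext)
  fix i j
  have "smat_mult n (smat_mult n X Y) Z i j = (\<Sum>k<n. \<Sum>l<n. X i l * Y l k * Z k j)"
    by (simp add: smat_mult_def sum_distrib_right)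
  also have "\<dots> = (\<Sum>l<n. \<Sum>k<n. X i l * (Y l k * Z k j))"
    by (subst sum.swap) (simp add: mult.assoc)
  also have "\<dots> = smat_mult n X (smat_mult n Y Z) i j"
    by (simp add: smat_mult_def sum_distrib_left)
  finally show "smat_mult n (smat_mult n X Y) Z i j = smat_mult n X (smat_mult n Y Z) i j" .
qed

lemma smat_mult_cong: "(\<And>l. l < n \<Longrightarrow> X i l = X' i l) \<Longrightarrow> (\<And>l. l < n \<Longrightarrow> Y l j = Y' l j) \<Longrightarrow>
   smat_mult n X Y i j = smat_mult n X' Y' i j"
  unfolding smat_mult_def by (rule sum.cong) auto

lemma pow_Suc_left: "i < n \<Longrightarrow> j < n \<Longrightarrow> smat_pow n M (Suc k) i j = smat_mult n M (smat_pow n M k) i j"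
proof (induction k arbitrary: i j)
  case 0
  have "smat_mult n smat_id M i j = M i j"
  proof -
    have "(\<Sum>k<n. smat_id i k * M k j) = (\<Sum>k<n. if k = i then M i j else 0)"
      by (rule sum.cong) (auto simp: smat_id_def)
    then show ?thesis unfolding smat_mult_def using 0 by simp
  qed
  moreover have "smat_mult n M smat_id i j = M i j"
  proof -
    have "(\<Sum>k<n. M i k * smat_id k j) = (\<Sum>k<n. if k = j then M i j else 0)"
      by (rule sum.cong) (auto simp: smat_id_def)
    then show ?thesis unfolding smat_mult_def using 0 by simp
  qed
  ultimately show ?case by simp
next
  case (Suc k)
  have "smat_pow n M (Suc (Suc k)) i j = smat_mult n (smat_pow n M (Suc k)) M i j" by simp
  also have "\<dots> = smat_mult n (smat_mult n M (smat_pow n M k)) M i j"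
    by (rule smat_mult_cong) (use Suc in auto)
  also have "\<dots> = smat_mult n M (smat_pow n M (Suc k)) i j"
    by (simp add: smat_mult_assoc)
  finally show ?case .
qed

locale kmat =
  fixes n :: nat and M :: "'g::linordered_ab_group_add smat"
  assumes n_pos: "1 \<le> n"
    and M00: "M 0 0 = 1"
    and Msmall: "\<And>i j. i < n \<Longrightarrow> j < n \<Longrightarrow> (i, j) \<noteq> (0, 0) \<Longrightarrow> small (M i j) 1"
begin

lemma M_mle: "i < n \<Longrightarrow> j < n \<Longrightarrow> mle (M i j) 1"
  using Msmall[of i j] M00 small_imp_mle by (cases "(i, j) = (0, 0)") auto

lemma wprod_cases: "set xs \<subseteq> {..<n} \<Longrightarrow> wprod M xs = 1 \<or> small (wprod M xs) 1"
proof (induction xs)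
  case Nil then show ?case by simp
next
  case (Cons x xs)
  show ?case
  proof (cases xs)
    case Nil then show ?thesis by simp
  next
    case (Cons y zs)
    have xy: "x < n" "y < n" using Cons.prems Cons by auto
    have IH: "wprod M xs = 1 \<or> small (wprod M xs) 1" using Cons.IH Cons.prems by auto
    have m: "mle (wprod M xs) 1" using IH small_imp_mle by auto
    show ?thesis
    proof (cases "(x, y) = (0, 0)")
      case True
      then show ?thesis using IH Cons M00 by auto
    next
      case False
      have "small (M x y * wprod M xs) (1 * 1)"
        by (rule small_mult[OF Msmall[OF xy False] m])
      then show ?thesis using Cons by simp
    qed
  qed
qed

lemma wprod_mle: "set xs \<subseteq> {..<n} \<Longrightarrow> mle (wprod M xs) 1"
  using wprod_cases[of xs] small_imp_mle[of "wprod M xs" 1] by auto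

lemma wprod_absorb1: "set xs \<subseteq> {..<n} \<Longrightarrow> 1 + wprod M xs = 1"
  using wprod_cases[of xs] small_absorb[of "wprod M xs" 1] by auto

lemma walk_shorten:
  assumes xs: "xs \<in> walks n k i j" and k: "n \<le> k"
  shows "\<exists>k' < k. \<exists>ys \<in> walks n k' i j. wprod M xs = wprod M ys \<or> small (wprod M xs) (wprod M ys)"
proof -
  have len: "length xs = Suc k" and st: "set xs \<subseteq> {..<n}" and hd: "hd xs = i" and la: "last xs = j"
    using xs unfolding walks_def by auto
  have "\<not> distinct xs"
  proof
    assume "distinct xs"
    then have "card (set xs) = Suc k" using len distinct_card by metis
    moreover have "card (set xs) \<le> n" using st card_mono[of "{..<n}" "set xs"] by simp
    ultimately show False using k by simp
  qed
  then obtain as y bs cs where dec: "xs = as @ [y] @ bs @ [y] @ cs"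
    using not_distinct_decomp by blast
  define ys where "ys = as @ [y] @ cs"
  define k' where "k' = length as + length cs"
  have lk: "k' < k" using len dec unfolding k'_def by simp
  have ysw: "ys \<in> walks n k' i j"
    unfolding walks_def ys_def k'_def using st hd la dec
    by (cases as; cases cs) auto
  have c: "set (y # bs @ [y]) \<subseteq> {..<n}" using st dec by auto
  have "wprod M xs = wprod M (as @ [y]) * wprod M (y # bs @ [y]) * wprod M (y # cs)"
    unfolding dec using wprod_append[of M as y "bs @ [y] @ cs"] wprod_append[of M "y # bs" y cs]
    by (simp add: mult.assoc)
  moreover have "wprod M ys = wprod M (as @ [y]) * wprod M (y # cs)"
    unfolding ys_def using wprod_append[of M as y cs] by simp
  ultimately have "wprod M xs = wprod M ys \<or> small (wprod M xs) (wprod M ys)"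
    using wprod_cases[OF c]
  proof (elim disjE)
    assume e1: "wprod M xs = wprod M (as @ [y]) * wprod M (y # bs @ [y]) * wprod M (y # cs)"
      and e2: "wprod M ys = wprod M (as @ [y]) * wprod M (y # cs)"
      and sm: "small (wprod M (y # bs @ [y])) 1"
    have "small (wprod M (y # bs @ [y]) * (wprod M (as @ [y]) * wprod M (y # cs))) (1 * (wprod M (as @ [y]) * wprod M (y # cs)))"
      by (rule small_mult[OF sm mle_refl])
    then show ?thesis using e1 e2 by (simp add: ac_simps)
  qed (simp_all add: ac_simps)
  then show ?thesis using lk ysw by blast
qed

lemma partial_eq: "kleene_partial n M K i j = (\<Sum>k\<le>K. smat_pow n M k i j)"
  by (simp add: kleene_partial_def)

lemma partial_absorb_walk:
  assumes "i < n" "j < n" "k' \<le> K" "ys \<in> walks n k' i j"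
  shows "kleene_partial n M K i j + wprod M ys = kleene_partial n M K i j"
proof -
  have a: "smat_pow n M k' i j + wprod M ys = smat_pow n M k' i j"
    unfolding pow_walks[OF assms(1,2)] by (rule sum_summand[OF finite_walks assms(4)])
  have b: "kleene_partial n M K i j + smat_pow n M k' i j = kleene_partial n M K i j"
    unfolding partial_eq by (rule sum_summand) (use assms(3) in auto)
  have "kleene_partial n M K i j + wprod M ys
      = (kleene_partial n M K i j + smat_pow n M k' i j) + wprod M ys" using b by simp
  also have "\<dots> = kleene_partial n M K i j + (smat_pow n M k' i j + wprod M ys)"
    by (rule add.assoc)
  also have "\<dots> = kleene_partial n M K i j" using a b by simp
  finally show ?thesis .
qed

lemma partial_Suc_stable:
  assumes "i < n" "j < n" "n \<le> Suc K"
  shows "kleene_partial n M (Suc K) i j = kleene_partial n M K i j"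
proof -
  have "kleene_partial n M K i j + smat_pow n M (Suc K) i j = kleene_partial n M K i j"
    unfolding pow_walks[OF assms(1,2)]
  proof (rule sum_absorb)
    fix xs assume xs: "xs \<in> walks n (Suc K) i j"
    obtain k' ys where k': "k' < Suc K" and ys: "ys \<in> walks n k' i j"
      and c: "wprod M xs = wprod M ys \<or> small (wprod M xs) (wprod M ys)"
      using walk_shorten[OF xs assms(3)] by blast
    have a: "kleene_partial n M K i j + wprod M ys = kleene_partial n M K i j"
      using partial_absorb_walk[OF assms(1,2) _ ys] k' by simp
    from c show "kleene_partial n M K i j + wprod M xs = kleene_partial n M K i j"
    proof
      assume "small (wprod M xs) (wprod M ys)"
      moreover have "mle (wprod M ys) (kleene_partial n M K i j)" using absorb_mle[OF a] .
      ultimately show ?thesis using small_mle_trans small_absorb by blast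
    qed (use a in simp)
  qed
  then show ?thesis unfolding partial_eq by (simp add: add.commute)
qed

lemma partial_stable:
  assumes "i < n" "j < n" "n - 1 \<le> K"
  shows "kleene_partial n M K i j = kleene_partial n M (n - 1) i j"
  using assms(3)
proof (induction K rule: dec_induct)
  case (step K)
  then show ?case using partial_Suc_stable[OF assms(1,2)] by simp
qed simp

lemma converges: "kleene_converges n M"
  unfolding kleene_converges_def
  by (rule exI[of _ "kleene_partial n M (n - 1)"], rule exI[of _ "n - 1"]) (intro allI impI, rule partial_stable; simp)

lemma star_eq:
  assumes "i < n" "j < n"
  shows "kleene_star n M i j = kleene_partial n M (n - 1) i j"
  unfolding kleene_star_def
proof (rule the_equality)
  show "\<exists>K0. \<forall>K\<ge>K0. kleene_partial n M K i j = kleene_partial n M (n - 1) i j"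
    using partial_stable[OF assms] by blast
next
  fix s assume "\<exists>K0. \<forall>K\<ge>K0. kleene_partial n M K i j = s"
  then obtain K0 where "\<forall>K\<ge>K0. kleene_partial n M K i j = s" by blast
  then have "kleene_partial n M (max K0 (n - 1)) i j = s" by simp
  then show "s = kleene_partial n M (n - 1) i j" using partial_stable[OF assms, of "max K0 (n - 1)"] by simp
qed

lemma pow_absorb1: "i < n \<Longrightarrow> j < n \<Longrightarrow> 1 + smat_pow n M k i j = 1"
  unfolding pow_walks by (rule sum_absorb, rule wprod_absorb1) (auto simp: walks_def)

lemma star_absorb1: "i < n \<Longrightarrow> j < n \<Longrightarrow> 1 + kleene_star n M i j = 1"
  unfolding star_eq partial_eq by (rule sum_absorb, rule pow_absorb1)

lemma star_mle1: "i < n \<Longrightarrow> j < n \<Longrightarrow> mle (kleene_star n M i j) 1"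
  by (rule absorb_mle, rule star_absorb1)

lemma star00: "kleene_star n M 0 0 = 1"
proof -
  have "kleene_star n M 0 0 = (\<Sum>k\<le>n - 1. smat_pow n M k 0 0)"
    using star_eq[of 0 0] n_pos partial_eq by simp
  also have "\<dots> = 1"
    by (rule sum_const_absorb[of _ 0]) (use n_pos pow_absorb1 in \<open>auto simp: smat_id_def\<close>)
  finally show ?thesis .
qed

lemma star_fix:
  assumes "i < n" "0 < i"
  shows "kleene_star n M i 0 = (\<Sum>j<n. M i j * kleene_star n M j 0)"
proof -
  have "kleene_star n M i 0 = kleene_partial n M n i 0"
    using star_eq[of i 0] partial_stable[of i 0 n] assms n_pos by simp
  also have "\<dots> = smat_pow n M 0 i 0 + (\<Sum>k<n. smat_pow n M (Suc k) i 0)"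
    unfolding partial_eq by (rule sum.atMost_shift)
  also have "\<dots> = (\<Sum>k<n. \<Sum>j<n. M i j * smat_pow n M k j 0)"
    using assms n_pos by (simp add: smat_id_def pow_Suc_left smat_mult_def del: smat_pow.simps(2))
  also have "\<dots> = (\<Sum>j<n. M i j * (\<Sum>k<n. smat_pow n M k j 0))"
    by (subst sum.swap) (simp add: sum_distrib_left)
  also have "\<dots> = (\<Sum>j<n. M i j * kleene_star n M j 0)"
  proof (rule sum.cong[OF refl])
    fix j assume j: "j \<in> {..<n}"
    have "{..<n} = {..n - 1}" using n_pos by auto
    then have "(\<Sum>k<n. smat_pow n M k j 0) = kleene_partial n M (n - 1) j 0"
      unfolding partial_eq by simp
    also have "\<dots> = kleene_star n M j 0" using star_eq[of j 0] j n_pos by simp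
    finally show "M i j * (\<Sum>k<n. smat_pow n M k j 0) = M i j * kleene_star n M j 0" by simp
  qed
  finally show ?thesis .
qed

lemma star_col_eigen:
  assumes "i < n"
  shows "(\<Sum>j<n. M i j * kleene_star n M j 0) = kleene_star n M i 0"
proof (cases "i = 0")
  case False
  then show ?thesis using star_fix[OF assms] by simp
next
  case True
  have "(\<Sum>j<n. M 0 j * kleene_star n M j 0) = 1"
  proof (rule sum_const_absorb[of _ 0])
    show "M 0 0 * kleene_star n M 0 0 = 1" by (simp add: M00 star00)
  next
    fix j assume j: "j \<in> {..<n}"
    show "1 + M 0 j * kleene_star n M j 0 = 1"
    proof (cases "j = 0")
      case True then show ?thesis by (simp add: M00 star00)
    next
      case False
      have "small (M 0 j * kleene_star n M j 0) (1 * 1)"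
        by (rule small_mult[OF Msmall star_mle1]) (use j n_pos False in auto)
      then show ?thesis using small_absorb by simp
    qed
  qed (use n_pos in auto)
  then show ?thesis using True star00 by simp
qed

end


lemma exists_max_mle: "finite S \<Longrightarrow> S \<noteq> {} \<Longrightarrow> \<exists>i\<in>S. \<forall>j\<in>S. mle (f j) (f i)"
proof (induction S rule: finite_ne_induct)
  case (singleton x) then show ?case by simp
next
  case (insert x F)
  then obtain i where i: "i \<in> F" "\<forall>j\<in>F. mle (f j) (f i)" by blast
  show ?case
  proof (cases "mle (f x) (f i)")
    case True then show ?thesis using i by auto
  next
    case False
    then have "mle (f i) (f x)" using mle_total by blast
    then show ?thesis using i mle_trans by (metis insert_iff mle_refl)
  qed
qed

lemma uniq_fix:
  fixes x y :: "nat \<Rightarrow> 'g::linordered_ab_group_add smax"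
  assumes I: "I \<subseteq> {..<n}"
   and hy: "\<And>i. i \<in> I \<Longrightarrow> y i = (\<Sum>j<n. M i j * y j)"
   and hx: "\<And>i. i \<in> I \<Longrightarrow> R i (x i) (\<Sum>j<n. M i j * x j)"
   and out: "\<And>j. j < n \<Longrightarrow> j \<notin> I \<Longrightarrow> x j = y j"
   and Ms: "\<And>i j. i \<in> I \<Longrightarrow> j < n \<Longrightarrow> small (M i j) 1"
   and R1: "\<And>i r. i \<in> I \<Longrightarrow> R i (x i) r \<Longrightarrow> x i \<noteq> 0 \<Longrightarrow> mle (x i) r"
   and R2: "\<And>i. i \<in> I \<Longrightarrow> R i (x i) (y i) \<Longrightarrow> x i = y i"
  shows "\<forall>i\<in>I. x i = y i"
proof -
  have finI: "finite I" using I finite_subset by blast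
  have A: "mle (x i) (y i)" if iI: "i \<in> I" for i
  proof (rule ccontr)
    assume "\<not> mle (x i) (y i)"
    define S where "S = {i \<in> I. \<not> mle (x i) (y i)}"
    have "S \<noteq> {}" using iI \<open>\<not> mle (x i) (y i)\<close> S_def by blast
    moreover have "finite S" using finI S_def by simp
    ultimately obtain i where iS: "i \<in> S" and mx: "\<forall>j\<in>S. mle (x j) (x i)"
      using exists_max_mle[of S x] by blast
    have iI: "i \<in> I" and nm: "\<not> mle (x i) (y i)" using iS S_def by auto
    have xi0: "x i \<noteq> 0" using nm by auto
    have "mle (x i) (\<Sum>j<n. M i j * x j)" using R1[OF iI hx[OF iI] xi0] .
    then obtain j where j: "j < n" and mj: "mle (x i) (M i j * x j)"
      using sum_mle_ex[OF _ xi0] by blast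
    have "small (M i j * x j) (x j)" using small_mult1[OF Ms[OF iI j]] .
    then have "small (x i) (x j)" using mle_small_trans mj by blast
    then have "\<not> mle (x j) (x i)" using small_not_mle xi0 by blast
    then have "j \<notin> S" using mx by blast
    then have "mle (x j) (y j)" using out[OF j] S_def by (cases "j \<in> I") auto
    then have "mle (M i j * x j) (M i j * y j)" using mle_mult mle_refl by blast
    moreover have "mle (M i j * y j) (y i)" using hy[OF iI] sum_mle[of "{..<n}" j] j by simp
    ultimately have "mle (x i) (y i)" using mj mle_trans by blast
    then show False using nm by simp
  qed
  show ?thesis
  proof (rule ccontr)
    assume "\<not> (\<forall>i\<in>I. x i = y i)"
    define S where "S = {i \<in> I. x i \<noteq> y i}"
    have "S \<noteq> {}" using \<open>\<not> (\<forall>i\<in>I. x i = y i)\<close> S_def by blast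
    moreover have finS: "finite S" using finI S_def by simp
    ultimately obtain i where iS: "i \<in> S" and mx: "\<forall>j\<in>S. mle (y j) (y i)"
      using exists_max_mle[of S y] by blast
    have iI: "i \<in> I" and ne: "x i \<noteq> y i" using iS S_def by auto
    have yi0: "y i \<noteq> 0"
    proof
      assume "y i = 0"
      then have "x i = 0" using A[OF iI] by (simp add: mle_zero2)
      then show False using ne \<open>y i = 0\<close> by simp
    qed
    have SI: "S \<subseteq> {..<n}" using S_def I by auto
    define T where "T = (\<Sum>j\<in>{..<n} - S. M i j * y j)"
    define U where "U = (\<Sum>j\<in>S. M i j * y j)"
    define U' where "U' = (\<Sum>j\<in>S. M i j * x j)"
    have ysplit: "(\<Sum>j<n. M i j * y j) = T + U"
      unfolding T_def U_def using sum.subset_diff[OF SI finite_lessThan] by simp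
    have xsplit: "(\<Sum>j<n. M i j * x j) = T + U'"
    proof -
      have "(\<Sum>j<n. M i j * x j) = (\<Sum>j\<in>{..<n} - S. M i j * x j) + U'"
        unfolding U'_def using sum.subset_diff[OF SI finite_lessThan] by simp
      moreover have "(\<Sum>j\<in>{..<n} - S. M i j * x j) = T"
        unfolding T_def
      proof (rule sum.cong[OF refl])
        fix j assume "j \<in> {..<n} - S"
        then have "x j = y j" using out S_def by (cases "j \<in> I") auto
        then show "M i j * x j = M i j * y j" by simp
      qed
      ultimately show ?thesis by simp
    qed
    have smU: "small U (y i)" unfolding U_def
    proof (rule sum_small_bound)
      fix j assume "j \<in> S"
      then have j: "j < n" "mle (y j) (y i)" using SI mx by auto
      show "small (M i j * y j) (y i)"
        using small_mle_trans[OF small_mult1[OF Ms[OF iI j(1)]] j(2)] .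
    qed
    have smU': "small U' (y i)" unfolding U'_def
    proof (rule sum_small_bound)
      fix j assume jS: "j \<in> S"
      then have j: "j < n" "mle (y j) (y i)" "j \<in> I" using SI mx S_def by auto
      have "small (M i j * x j) (x j)" using small_mult1[OF Ms[OF iI j(1)]] .
      then show "small (M i j * x j) (y i)"
        using small_mle_trans mle_trans A[OF j(3)] j(2) by blast
    qed
    have yT: "y i = T" using split_small[OF _ ] hy[OF iI] ysplit smU by metis
    have "(\<Sum>j<n. M i j * x j) = y i"
      using xsplit yT small_absorb smU' by simp
    then have "x i = y i" using R2[OF iI] hx[OF iI] by simp
    then show False using ne by simp
  qed
qed


definition sh :: "(nat \<Rightarrow> nat) \<Rightarrow> nat \<Rightarrow> nat" where
  "sh \<sigma> r = (case r of 0 \<Rightarrow> 0 | Suc k \<Rightarrow> Suc (\<sigma> k))"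

lemma sh_0 [simp]: "sh \<sigma> 0 = 0" and sh_Suc [simp]: "sh \<sigma> (Suc k) = Suc (\<sigma> k)"
  by (simp_all add: sh_def)

lemma sh_comp: "sh (p \<circ> q) = sh p \<circ> sh q"
  by (rule ext, simp add: sh_def split: nat.splits)

lemma sh_id: "sh id = id"
  by (rule ext, simp add: sh_def split: nat.splits)

lemma sh_transpose: "sh (transpose a b) = transpose (Suc a) (Suc b)"
  by (rule ext, simp add: sh_def transpose_def split: nat.splits)

lemma sh_permutes:
  assumes "\<sigma> permutes {..<m}"
  shows "sh \<sigma> permutes {..<Suc m}"
  unfolding permutes_def
proof (intro conjI allI impI)
  fix x assume "x \<notin> {..<Suc m}"
  then obtain k where "x = Suc k" "k \<notin> {..<m}" by (cases x) auto
  then show "sh \<sigma> x = x" using permutes_not_in[OF assms] by simp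
next
  fix y
  show "\<exists>!x. sh \<sigma> x = y"
  proof (cases y)
    case 0
    show ?thesis
      by (rule ex1I[of _ 0]) (auto simp: 0 sh_def split: nat.splits)
  next
    case (Suc y')
    obtain k where k: "\<sigma> k = y'" using permutes_surj[OF assms] by (metis surjD)
    show ?thesis
    proof (rule ex1I[of _ "Suc k"])
      show "sh \<sigma> (Suc k) = y" using k Suc by simp
    next
      fix x assume "sh \<sigma> x = y"
      then obtain x' where "x = Suc x'" "\<sigma> x' = y'" using Suc by (cases x) auto
      then show "x = Suc k" using k permutes_inj[OF assms] by (auto dest: injD)
    qed
  qed
qed

lemma evenperm_sh:
  assumes "\<sigma> permutes {..<m}"
  shows "evenperm (sh \<sigma>) = evenperm \<sigma>"
  using assms finite_lessThan
proof (induction rule: permutes_induct)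
  case id
  show ?case by (subst sh_id) (rule refl)
next
  case (swap a b p)
  have pp: "permutation p" using permutes_imp_permutation[OF finite_lessThan swap.hyps(4)] .
  have psh: "permutation (sh p)"
    using permutes_imp_permutation[OF finite_lessThan sh_permutes[OF swap.hyps(4)]] .
  have "evenperm (sh (transpose a b \<circ> p)) = evenperm (transpose (Suc a) (Suc b) \<circ> sh p)"
    by (simp add: sh_comp sh_transpose)
  also have "\<dots> = (evenperm (transpose (Suc a) (Suc b)) = evenperm (sh p))"
    by (rule evenperm_comp[OF permutation_swap_id psh])
  also have "\<dots> = (evenperm (transpose a b) = evenperm p)"
    using swap.hyps(3) swap.IH by (simp add: evenperm_swap)
  also have "\<dots> = evenperm (transpose a b \<circ> p)"
    by (rule evenperm_comp[OF permutation_swap_id pp, symmetric])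
  finally show ?case .
qed

fun rho :: "nat \<Rightarrow> nat \<Rightarrow> nat" where
  "rho 0 = id"
| "rho (Suc i) = transpose i (Suc i) \<circ> rho i"

lemma rho_0: "rho i 0 = i"
  by (induction i) auto

lemma rho_Suc: "rho i (Suc k) = skip i k"
  by (induction i) (auto simp: skip_def transpose_def)

lemma rho_permutes: "rho i permutes {..i}"
proof (induction i)
  case 0 show ?case by (simp only: rho.simps permutes_id)
next
  case (Suc i)
  have "rho i permutes {..Suc i}" using permutes_subset[OF Suc.IH] by auto
  moreover have "transpose i (Suc i) permutes {..Suc i}" by (rule permutes_swap_id) auto
  ultimately show ?case by (simp only: rho.simps permutes_compose)
qed

lemma evenperm_rho: "evenperm (rho i) = even i"
proof (induction i)
  case 0 then show ?case by simp
next
  case (Suc i)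
  have "permutation (rho i)" using permutes_imp_permutation[OF _ rho_permutes] by simp
  then have "evenperm (rho (Suc i)) = (evenperm (transpose i (Suc i)) = evenperm (rho i))"
    by (simp only: rho.simps) (rule evenperm_comp[OF permutation_swap_id])
  then show ?case using Suc.IH by (simp add: evenperm_swap del: rho.simps)
qed

lemma sminus1_pow: "(sminus 1 :: 'g::linordered_ab_group_add smax) ^ i = (if even i then 1 else sminus 1)"
  by (induction i) (auto simp: sdefs)

lemma ssign_rho_sh:
  assumes "\<sigma> permutes {..<m}"
  shows "ssign (rho i \<circ> sh \<sigma>) = ((sminus 1) ^ i * ssign \<sigma> :: 'g::linordered_ab_group_add smax)"
proof -
  have p1: "permutation (rho i)" using permutes_imp_permutation[OF _ rho_permutes] by simp
  have p2: "permutation (sh \<sigma>)" using permutes_imp_permutation[OF _ sh_permutes[OF assms]] by simp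
  have "evenperm (rho i \<circ> sh \<sigma>) = (even i = evenperm \<sigma>)"
    using evenperm_comp[OF p1 p2] evenperm_rho evenperm_sh[OF assms] by simp
  then show ?thesis unfolding ssign_def sminus1_pow by (auto simp: sdefs)
qed

definition Dsum :: "'g::linordered_ab_group_add smat \<Rightarrow> nat set \<Rightarrow> nat \<Rightarrow> 'g smax" where
  "Dsum B V i = (\<Sum>\<phi> \<in> {\<phi>. \<phi> permutes V \<and> \<phi> 0 = i}. ssign \<phi> * (\<Prod>r\<in>V - {0}. B r (\<phi> r)))"

definition detU :: "'g::linordered_ab_group_add smat \<Rightarrow> nat set \<Rightarrow> 'g smax" where
  "detU B U = (\<Sum>\<phi> \<in> {\<phi>. \<phi> permutes U}. ssign \<phi> * (\<Prod>r\<in>U. B r (\<phi> r)))"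

lemma unsh_permutes:
  assumes psi: "\<psi> permutes {..<Suc m}" and z: "\<psi> 0 = 0"
  shows "(\<lambda>k. \<psi> (Suc k) - 1) permutes {..<m}"
  unfolding permutes_def
proof (intro conjI allI impI)
  fix x assume "x \<notin> {..<m}"
  then show "\<psi> (Suc x) - 1 = x" using permutes_not_in[OF psi] by simp
next
  have nz: "\<psi> (Suc k) \<noteq> 0" for k using z permutes_inj[OF psi] by (metis injD nat.distinct(1))
  fix y
  obtain x where x: "\<psi> x = Suc y" using permutes_surj[OF psi] by (metis surjD)
  have "x \<noteq> 0"
  proof
    assume "x = 0" then show False using x z by simp
  qed
  then obtain x' where x': "x = Suc x'" by (cases x) auto
  show "\<exists>!x. \<psi> (Suc x) - 1 = y"
  proof (rule ex1I[of _ x'])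
    show "\<psi> (Suc x') - 1 = y" using x x' by simp
  next
    fix w assume "\<psi> (Suc w) - 1 = y"
    then have "\<psi> (Suc w) = \<psi> (Suc x')" using nz[of w] x x' by simp
    then show "w = x'" using permutes_inj[OF psi] by (auto dest: injD)
  qed
qed

lemma minor_Dsum:
  fixes B :: "'g::linordered_ab_group_add smat"
  assumes n: "1 \<le> n" and i: "i < n"
  shows "(sminus 1) ^ i * sdet (n - 1) (minor B 0 i) = Dsum B {..<n} i"
proof -
  define m where "m = n - 1"
  have nm: "n = Suc m" using n m_def by simp
  have rp: "rho i permutes {..<n}" by (rule permutes_subset[OF rho_permutes]) (use i in auto)
  define F where "F = (\<lambda>\<sigma>. rho i \<circ> sh \<sigma>)"
  define G where "G = (\<lambda>\<phi>. (\<lambda>k. inv (rho i) (\<phi> (Suc k)) - 1))"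
  have "(sminus 1) ^ i * sdet (n - 1) (minor B 0 i)
      = (\<Sum>\<sigma> | \<sigma> permutes {..<m}. (sminus 1) ^ i * ssign \<sigma> * (\<Prod>k<m. B (Suc k) (skip i (\<sigma> k))))"
    unfolding sdet_def minor_def m_def by (simp add: sum_distrib_left skip_def mult.assoc)
  also have "\<dots> = (\<Sum>\<phi> \<in> {\<phi>. \<phi> permutes {..<n} \<and> \<phi> 0 = i}. ssign \<phi> * (\<Prod>r\<in>{..<n} - {0}. B r (\<phi> r)))"
  proof (rule sum.reindex_bij_witness[where i = G and j = F])
    fix \<sigma> assume s: "\<sigma> \<in> {\<sigma>. \<sigma> permutes {..<m}}"
    show "G (F \<sigma>) = \<sigma>"
      unfolding F_def G_def by (rule ext) (simp add: permutes_inverses(2)[OF rp])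
    show "F \<sigma> \<in> {\<phi>. \<phi> permutes {..<n} \<and> \<phi> 0 = i}"
    proof -
      have "sh \<sigma> permutes {..<n}" using sh_permutes[of \<sigma> m] s nm by simp
      then show ?thesis unfolding F_def using permutes_compose[OF _ rp] by (auto simp: rho_0)
    qed
    have "(\<Prod>r\<in>{..<n} - {0}. B r (F \<sigma> r)) = (\<Prod>k<m. B (Suc k) (F \<sigma> (Suc k)))"
    proof -
      have "{..<n} - {0} = Suc ` {..<m}" using nm by (auto simp: image_iff) (metis lessThan_iff less_Suc_eq_0_disj)
      then show ?thesis by (simp add: prod.reindex)
    qed
    also have "\<dots> = (\<Prod>k<m. B (Suc k) (skip i (\<sigma> k)))"
      unfolding F_def by (simp add: rho_Suc)
    finally show "ssign (F \<sigma>) * (\<Prod>r\<in>{..<n} - {0}. B r (F \<sigma> r))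
        = (sminus 1) ^ i * ssign \<sigma> * (\<Prod>k<m. B (Suc k) (skip i (\<sigma> k)))"
      using s unfolding F_def by (simp add: ssign_rho_sh)
  next
    fix \<phi> assume ph: "\<phi> \<in> {\<phi>. \<phi> permutes {..<n} \<and> \<phi> 0 = i}"
    then have pp: "\<phi> permutes {..<n}" and p0: "\<phi> 0 = i" by auto
    define \<psi> where "\<psi> = inv (rho i) \<circ> \<phi>"
    have psp: "\<psi> permutes {..<Suc m}" unfolding \<psi>_def using permutes_compose[OF pp permutes_inv[OF rp]] nm by simp
    have ps0: "\<psi> 0 = 0" unfolding \<psi>_def using p0 rho_0[of i] permutes_inverses(2)[OF rp, of 0] by simp
    have Gp: "G \<phi> = (\<lambda>k. \<psi> (Suc k) - 1)" unfolding G_def \<psi>_def by simp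
    show "G \<phi> \<in> {\<sigma>. \<sigma> permutes {..<m}}" using unsh_permutes[OF psp ps0] Gp by simp
    have nz: "\<psi> (Suc k) \<noteq> 0" for k using ps0 permutes_inj[OF psp] by (metis injD nat.distinct(1))
    show "F (G \<phi>) = \<phi>"
    proof (rule ext)
      fix r
      show "F (G \<phi>) r = \<phi> r"
      proof (cases r)
        case 0 then show ?thesis by (simp add: F_def rho_0 p0)
      next
        case (Suc k)
        have "F (G \<phi>) r = rho i (\<psi> (Suc k))" unfolding F_def Gp Suc using nz[of k] by simp
        also have "\<dots> = \<phi> r" unfolding \<psi>_def Suc by (simp add: permutes_inverses(1)[OF rp])
        finally show ?thesis .
      qed
    qed
  qed
  finally show ?thesis unfolding Dsum_def .
qed

lemma ssign_comp_transpose: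
  assumes "\<phi> permutes V" "finite V" "a \<noteq> b"
  shows "ssign (\<phi> \<circ> transpose a b) = sminus (ssign \<phi> :: 'g::linordered_ab_group_add smax)"
proof -
  have "permutation \<phi>" using permutes_imp_permutation[OF assms(2,1)] .
  then have "evenperm (\<phi> \<circ> transpose a b) = (\<not> evenperm \<phi>)"
    using evenperm_comp[OF \<open>permutation \<phi>\<close> permutation_swap_id, of a b] assms(3) by (simp add: evenperm_swap)
  then show ?thesis unfolding ssign_def by (auto simp: sdefs)
qed

lemma sminus_sminus_mult: "sminus a * sminus b = a * (b::'g::linordered_ab_group_add smax)"
  by (simp add: sminus_mult[symmetric] sminus_mult2[symmetric])

lemma Dsum_rec:
  fixes B :: "'g::linordered_ab_group_add smat"
  assumes finV: "finite V" and V0: "0 \<in> V" and iV: "i \<in> V" and i0: "i \<noteq> 0"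
  shows "Dsum B V i = (\<Sum>j\<in>V - {i}. sminus (B i j) * Dsum B (V - {i}) j)"
proof -
  define T where "T = {\<phi>. \<phi> permutes V \<and> \<phi> 0 = i}"
  define h where "h = (\<lambda>\<phi>. ssign \<phi> * (\<Prod>r\<in>V - {0}. B r (\<phi> r)))"
  define t where "t = transpose 0 i"
  have finT: "finite T" unfolding T_def
    by (rule finite_subset[OF _ finite_permutations[OF finV]]) auto
  have img: "(\<lambda>\<phi>. \<phi> i) ` T \<subseteq> V - {i}"
  proof
    fix y assume "y \<in> (\<lambda>\<phi>. \<phi> i) ` T"
    then obtain \<phi> where p: "\<phi> permutes V" "\<phi> 0 = i" "y = \<phi> i" unfolding T_def by auto
    have "\<phi> i \<in> V" using permutes_in_image[OF p(1)] iV by simp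
    moreover have "\<phi> i \<noteq> i" using p(1,2) i0 permutes_inj[OF p(1)] by (metis injD)
    ultimately show "y \<in> V - {i}" using p(3) by auto
  qed
  have "Dsum B V i = sum h T" unfolding Dsum_def T_def h_def ..
  also have "\<dots> = (\<Sum>j\<in>V - {i}. sum h {\<phi> \<in> T. \<phi> i = j})"
    by (rule sum.group[symmetric, OF finT _ img]) (use finV in simp)
  also have "\<dots> = (\<Sum>j\<in>V - {i}. sminus (B i j) * Dsum B (V - {i}) j)"
  proof (rule sum.cong[OF refl])
    fix j assume jV: "j \<in> V - {i}"
    have "sum h {\<phi> \<in> T. \<phi> i = j}
        = (\<Sum>\<psi> \<in> {\<psi>. \<psi> permutes (V - {i}) \<and> \<psi> 0 = j}.
             sminus (B i j) * (ssign \<psi> * (\<Prod>r\<in>V - {i} - {0}. B r (\<psi> r))))"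
    proof (rule sum.reindex_bij_witness[where i = "\<lambda>\<psi>. \<psi> \<circ> t" and j = "\<lambda>\<phi>. \<phi> \<circ> t"])
      fix \<phi> assume "\<phi> \<in> {\<phi> \<in> T. \<phi> i = j}"
      then have p: "\<phi> permutes V" "\<phi> 0 = i" "\<phi> i = j" unfolding T_def by auto
      show "\<phi> \<circ> t \<circ> t = \<phi>" unfolding t_def by (simp add: comp_assoc)
      have pt: "\<phi> \<circ> t permutes V" unfolding t_def
        by (rule permutes_compose[OF permutes_swap_id p(1)]) (use V0 iV in auto)
      have "(\<phi> \<circ> t) i = i" using p unfolding t_def by simp
      then have "transpose i ((\<phi> \<circ> t) i) \<circ> (\<phi> \<circ> t) = \<phi> \<circ> t" by simp
      moreover have "transpose i ((\<phi> \<circ> t) i) \<circ> (\<phi> \<circ> t) permutes (V - {i})"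
      proof (rule permutes_insert_lemma)
        have "insert i (V - {i}) = V" using iV by auto
        then show "\<phi> \<circ> t permutes insert i (V - {i})" using pt by simp
      qed
      ultimately have "\<phi> \<circ> t permutes (V - {i})" by simp
      moreover have "(\<phi> \<circ> t) 0 = j" using p unfolding t_def by simp
      ultimately show "\<phi> \<circ> t \<in> {\<psi>. \<psi> permutes (V - {i}) \<and> \<psi> 0 = j}" by simp
      have sg: "ssign (\<phi> \<circ> t) = sminus (ssign \<phi>)"
        unfolding t_def by (rule ssign_comp_transpose[OF p(1) finV]) (use i0 in simp)
      have pr: "(\<Prod>r\<in>V - {i} - {0}. B r ((\<phi> \<circ> t) r)) = (\<Prod>r\<in>V - {0} - {i}. B r (\<phi> r))"
        by (rule prod.cong) (auto simp: t_def)
      have hr: "h \<phi> = ssign \<phi> * (B i j * (\<Prod>r\<in>V - {0} - {i}. B r (\<phi> r)))"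
        unfolding h_def using prod.remove[of "V - {0}" i "\<lambda>r. B r (\<phi> r)"] finV iV i0 p(3) by simp
      show "sminus (B i j) * (ssign (\<phi> \<circ> t) * (\<Prod>r\<in>V - {i} - {0}. B r ((\<phi> \<circ> t) r))) = h \<phi>"
        unfolding sg pr hr
      proof -
        let ?P = "\<Prod>r\<in>V - {0} - {i}. B r (\<phi> r)"
        have "sminus (B i j) * (sminus (ssign \<phi>) * ?P) = (sminus (B i j) * sminus (ssign \<phi>)) * ?P"
          by (simp add: mult.assoc)
        also have "\<dots> = (B i j * ssign \<phi>) * ?P" by (simp add: sminus_sminus_mult)
        also have "\<dots> = ssign \<phi> * (B i j * ?P)" by (simp only: mult.assoc mult.left_commute[of "B i j"])
        finally show "sminus (B i j) * (sminus (ssign \<phi>) * ?P) = ssign \<phi> * (B i j * ?P)" .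
      qed
    next
      fix \<psi> assume "\<psi> \<in> {\<psi>. \<psi> permutes (V - {i}) \<and> \<psi> 0 = j}"
      then have q: "\<psi> permutes (V - {i})" "\<psi> 0 = j" by auto
      show "\<psi> \<circ> t \<circ> t = \<psi>" unfolding t_def by (simp add: comp_assoc)
      have qV: "\<psi> permutes V" by (rule permutes_subset[OF q(1)]) auto
      have qi: "\<psi> i = i" using permutes_not_in[OF q(1)] by simp
      have "\<psi> \<circ> t permutes V" unfolding t_def
        by (rule permutes_compose[OF permutes_swap_id qV]) (use V0 iV in auto)
      moreover have "(\<psi> \<circ> t) 0 = i" "(\<psi> \<circ> t) i = j" using qi q(2) unfolding t_def by auto
      ultimately show "\<psi> \<circ> t \<in> {\<phi> \<in> T. \<phi> i = j}" unfolding T_def by simp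
    qed
    also have "\<dots> = sminus (B i j) * Dsum B (V - {i}) j"
      unfolding Dsum_def by (simp add: sum_distrib_left)
    finally show "sum h {\<phi> \<in> T. \<phi> i = j} = sminus (B i j) * Dsum B (V - {i}) j" .
  qed
  finally show ?thesis .
qed

lemma Dsum_0:
  assumes "finite V" "0 \<in> V"
  shows "Dsum B V 0 = detU B (V - {0})"
proof -
  have "{\<phi>. \<phi> permutes V \<and> \<phi> 0 = 0} = {\<phi>. \<phi> permutes (V - {0})}"
  proof (intro equalityI subsetI)
    fix \<phi> assume "\<phi> \<in> {\<phi>. \<phi> permutes V \<and> \<phi> 0 = 0}"
    then have p: "\<phi> permutes V" "\<phi> 0 = 0" by auto
    have "transpose 0 (\<phi> 0) \<circ> \<phi> permutes (V - {0})"
    proof (rule permutes_insert_lemma)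
      have "insert 0 (V - {0}) = V" using assms(2) by auto
      then show "\<phi> permutes insert 0 (V - {0})" using p by simp
    qed
    then show "\<phi> \<in> {\<phi>. \<phi> permutes (V - {0})}" using p by simp
  next
    fix \<phi> assume "\<phi> \<in> {\<phi>. \<phi> permutes (V - {0})}"
    then have p: "\<phi> permutes (V - {0})" by simp
    have "\<phi> permutes V" by (rule permutes_subset[OF p]) auto
    moreover have "\<phi> 0 = 0" using permutes_not_in[OF p] by simp
    ultimately show "\<phi> \<in> {\<phi>. \<phi> permutes V \<and> \<phi> 0 = 0}" by simp
  qed
  then show ?thesis unfolding Dsum_def detU_def by simp
qed

lemma prod_mle: "(\<And>r. r \<in> U \<Longrightarrow> mle (f r) (g r)) \<Longrightarrow> mle (prod f U) (prod g U)"
proof (induction U rule: infinite_finite_induct)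
  case (insert x F)
  then show ?case by (simp add: mle_mult)
qed auto

lemma prod_small:
  assumes "finite U" "r0 \<in> U" "small (f r0) (g r0)" "\<And>r. r \<in> U \<Longrightarrow> mle (f r) (g r)"
  shows "small (prod f U) (prod g (U::nat set) :: 'g::linordered_ab_group_add smax)"
proof -
  have "prod f U = f r0 * prod f (U - {r0})" "prod g U = g r0 * prod g (U - {r0})"
    using prod.remove[OF assms(1,2)] by auto
  moreover have "mle (prod f (U - {r0})) (prod g (U - {r0}))" by (rule prod_mle) (use assms(4) in auto)
  ultimately show ?thesis using small_mult[OF assms(3)] by simp
qed

lemma mle_ssign: "mle (ssign \<phi>) (1::'g::linordered_ab_group_add smax)"
  unfolding ssign_def mle_def by (auto simp: sdefs)

lemma detU_dom:
  fixes B :: "'g::linordered_ab_group_add smat"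
  assumes finU: "finite U" and g0: "g \<noteq> 0"
    and diag: "\<And>r. r \<in> U \<Longrightarrow> B r r = g"
    and off: "\<And>r c. r \<in> U \<Longrightarrow> c \<in> U \<Longrightarrow> r \<noteq> c \<Longrightarrow> small (B r c) g"
  shows "detU B U = g ^ card U"
  unfolding detU_def
proof (rule sum_const_absorb[of _ id])
  show "finite {\<phi>. \<phi> permutes U}" using finite_permutations[OF finU] .
  show "id \<in> {\<phi>. \<phi> permutes U}" by simp
  show "ssign id * (\<Prod>r\<in>U. B r (id r)) = g ^ card U"
    using diag by (simp add: ssign_def sdefs(4)[symmetric])
next
  fix \<phi> assume "\<phi> \<in> {\<phi>. \<phi> permutes U}"
  then have p: "\<phi> permutes U" by simp
  show "g ^ card U + ssign \<phi> * (\<Prod>r\<in>U. B r (\<phi> r)) = g ^ card U"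
  proof (cases "\<phi> = id")
    case True
    then show ?thesis using diag by (simp add: ssign_def sdefs(4)[symmetric])
  next
    case False
    then obtain r0 where r0: "\<phi> r0 \<noteq> r0" by (metis eq_id_iff)
    then have r0U: "r0 \<in> U" using permutes_not_in[OF p] by blast
    have inU: "\<phi> r \<in> U" if "r \<in> U" for r using permutes_in_image[OF p] that by simp
    have "small (\<Prod>r\<in>U. B r (\<phi> r)) (\<Prod>r\<in>U. g)"
    proof (rule prod_small[OF finU r0U])
      show "small (B r0 (\<phi> r0)) g" using off[OF r0U inU[OF r0U]] r0 by simp
      fix r assume rU: "r \<in> U"
      show "mle (B r (\<phi> r)) g"
        using off[OF rU inU[OF rU]] diag[OF rU] small_imp_mle by (cases "\<phi> r = r") auto
    qed
    then have "small ((\<Prod>r\<in>U. B r (\<phi> r)) * ssign \<phi>) ((\<Prod>r\<in>U. g) * 1)"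
      using small_mult mle_ssign by blast
    then show ?thesis using small_absorb by (simp add: mult.commute)
  qed
qed


fun Pf :: "'g::linordered_ab_group_add smat \<Rightarrow> nat \<Rightarrow> nat set \<Rightarrow> nat \<Rightarrow> 'g smax" where
  "Pf M 0 W i = M i 0"
| "Pf M (Suc k) W i = M i 0 + (\<Sum>j\<in>W - {i}. M i j * Pf M k (W - {i}) j)"

definition PP :: "'g::linordered_ab_group_add smat \<Rightarrow> nat set \<Rightarrow> nat \<Rightarrow> 'g smax" where
  "PP M W i = Pf M (card W) W i"

lemma PP_rec: "finite W \<Longrightarrow> i \<in> W \<Longrightarrow> PP M W i = M i 0 + (\<Sum>j\<in>W - {i}. M i j * PP M (W - {i}) j)"
proof -
  assume a: "finite W" "i \<in> W"
  have c: "card W = Suc (card (W - {i}))" using card_Suc_Diff1[OF a] by simp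
  show ?thesis unfolding PP_def c by simp
qed

context kmat
begin

lemma PP_mono:
  assumes "W \<subseteq> {1..<n}" "U \<subseteq> W" "i \<in> U"
  shows "mle (PP M U i) (PP M W i)"
  using assms
proof (induction "card W" arbitrary: W U i rule: less_induct)
  case less
  have finW: "finite W" by (rule finite_subset[OF less.prems(1)]) simp
  have finU: "finite U" by (rule finite_subset[OF less.prems(2) finW])
  have iW: "i \<in> W" using less.prems by auto
  have eW: "PP M W i = M i 0 + (\<Sum>j\<in>W - {i}. M i j * PP M (W - {i}) j)" using PP_rec[OF finW iW] .
  show ?case
    unfolding PP_rec[OF finU less.prems(3)] mle_add_iff
  proof
    show "mle (M i 0) (PP M W i)" unfolding eW by (rule mle_add1)
    show "mle (\<Sum>j\<in>U - {i}. M i j * PP M (U - {i}) j) (PP M W i)"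
    proof (rule sum_mle_bound)
      fix j assume jU: "j \<in> U - {i}"
      have "card (W - {i}) < card W" by (rule card_Diff1_less[OF finW iW])
      then have "mle (PP M (U - {i}) j) (PP M (W - {i}) j)"
        using less.hyps[of "W - {i}" "U - {i}" j] less.prems jU by auto
      then have "mle (M i j * PP M (U - {i}) j) (M i j * PP M (W - {i}) j)"
        using mle_mult mle_refl by blast
      moreover have "mle (M i j * PP M (W - {i}) j) (\<Sum>j\<in>W - {i}. M i j * PP M (W - {i}) j)"
        by (rule sum_mle) (use finW jU less.prems(2) in auto)
      moreover have "mle (\<Sum>j\<in>W - {i}. M i j * PP M (W - {i}) j) (PP M W i)"
        unfolding eW by (rule mle_add2)
      ultimately show "mle (M i j * PP M (U - {i}) j) (PP M W i)" using mle_trans by blast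
    qed
  qed
qed

lemma PP_decomp:
  assumes "W \<subseteq> {1..<n}" "i \<in> W" "j \<in> W" "i \<noteq> j"
  shows "\<exists>X. PP M W j = PP M (W - {i}) j + X \<and> mle X (PP M W i)"
  using assms
proof (induction "card W" arbitrary: W i j rule: less_induct)
  case less
  have finW: "finite W" by (rule finite_subset[OF less.prems(1)]) simp
  define W' where "W' = W - {j}"
  have finW': "finite W'" using finW W'_def by simp
  have W'sub: "W' \<subseteq> {1..<n}" using less.prems(1) W'_def by auto
  have iW': "i \<in> W'" using less.prems W'_def by auto
  have cW': "card W' < card W" unfolding W'_def by (rule card_Diff1_less[OF finW less.prems(3)])
  have "\<forall>k\<in>W' - {i}. \<exists>X. PP M W' k = PP M (W' - {i}) k + X \<and> mle X (PP M W' i)"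
  proof
    fix k assume "k \<in> W' - {i}"
    then show "\<exists>X. PP M W' k = PP M (W' - {i}) k + X \<and> mle X (PP M W' i)"
      using less.hyps[OF cW' W'sub iW'] by auto
  qed
  from bchoice[OF this] obtain Xf where Xf0: "\<forall>k\<in>W' - {i}. PP M W' k = PP M (W' - {i}) k + Xf k \<and> mle (Xf k) (PP M W' i)"
    by blast
  then have Xf: "\<And>k. k \<in> W' - {i} \<Longrightarrow> PP M W' k = PP M (W' - {i}) k + Xf k \<and> mle (Xf k) (PP M W' i)"
    by blast
  define K where "K = W' - {i}"
  have finK: "finite K" using finW' K_def by simp
  have eK: "W - {i} - {j} = K" unfolding K_def W'_def by auto
  define X where "X = M j i * PP M W' i + (\<Sum>k\<in>K. M j k * Xf k)"
  have "PP M W j = M j 0 + (\<Sum>k\<in>W'. M j k * PP M W' k)"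
    unfolding W'_def by (rule PP_rec[OF finW less.prems(3)])
  also have "(\<Sum>k\<in>W'. M j k * PP M W' k) = M j i * PP M W' i + (\<Sum>k\<in>K. M j k * PP M W' k)"
    unfolding K_def by (rule sum.remove[OF finW' iW'])
  also have "(\<Sum>k\<in>K. M j k * PP M W' k) = (\<Sum>k\<in>K. M j k * PP M (W' - {i}) k) + (\<Sum>k\<in>K. M j k * Xf k)"
    unfolding sum.distrib[symmetric] using Xf unfolding K_def by (intro sum.cong) (auto simp: distrib_left)
  finally have "PP M W j = (M j 0 + (\<Sum>k\<in>K. M j k * PP M K k)) + X"
    unfolding X_def K_def by (simp add: ac_simps)
  moreover have "PP M (W - {i}) j = M j 0 + (\<Sum>k\<in>K. M j k * PP M K k)"
    using PP_rec[of "W - {i}" j M] finW less.prems eK by simp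
  moreover have "mle X (PP M W i)"
    unfolding X_def mle_add_iff
  proof
    have m1: "mle (PP M W' i) (PP M W i)"
      by (rule PP_mono[OF less.prems(1)]) (use W'_def iW' in auto)
    have ji: "j < n" "i < n" using less.prems by auto
    show "mle (M j i * PP M W' i) (PP M W i)"
      using mle_trans[OF mle_mult1[OF M_mle[OF ji]] m1] .
    show "mle (\<Sum>k\<in>K. M j k * Xf k) (PP M W i)"
    proof (rule sum_mle_bound)
      fix k assume kK: "k \<in> K"
      have kn: "k < n" "j < n" using kK K_def W'_def less.prems by auto
      have "mle (M j k * Xf k) (Xf k)" by (rule mle_mult1[OF M_mle[OF kn(2,1)]])
      then show "mle (M j k * Xf k) (PP M W i)" using Xf[of k] kK K_def m1 mle_trans by blast
    qed
  qed
  ultimately show ?case by (intro exI[of _ X]) simp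
qed

lemma PP_fix:
  assumes W: "W \<subseteq> {1..<n}" and iW: "i \<in> W"
  shows "PP M W i = M i 0 + (\<Sum>j\<in>W. M i j * PP M W j)"
proof -
  have finW: "finite W" by (rule finite_subset[OF W]) simp
  have "\<forall>j\<in>W - {i}. \<exists>X. PP M W j = PP M (W - {i}) j + X \<and> mle X (PP M W i)"
    using PP_decomp[OF W iW] by auto
  from bchoice[OF this] obtain Xf where Xf0: "\<forall>j\<in>W - {i}. PP M W j = PP M (W - {i}) j + Xf j \<and> mle (Xf j) (PP M W i)"
    by blast
  then have Xf: "\<And>j. j \<in> W - {i} \<Longrightarrow> PP M W j = PP M (W - {i}) j + Xf j \<and> mle (Xf j) (PP M W i)"
    by blast
  have i1: "i < n" "0 < i" using W iW by auto
  have "M i 0 + (\<Sum>j\<in>W. M i j * PP M W j)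
      = M i 0 + (M i i * PP M W i + (\<Sum>j\<in>W - {i}. M i j * PP M W j))"
    by (simp add: sum.remove[OF finW iW])
  also have "(\<Sum>j\<in>W - {i}. M i j * PP M W j)
      = (\<Sum>j\<in>W - {i}. M i j * PP M (W - {i}) j) + (\<Sum>j\<in>W - {i}. M i j * Xf j)"
    unfolding sum.distrib[symmetric] using Xf by (intro sum.cong) (auto simp: distrib_left)
  finally have e: "M i 0 + (\<Sum>j\<in>W. M i j * PP M W j)
      = PP M W i + (M i i * PP M W i + (\<Sum>j\<in>W - {i}. M i j * Xf j))"
    unfolding PP_rec[OF finW iW] by (simp add: ac_simps)
  have "small (M i i * PP M W i + (\<Sum>j\<in>W - {i}. M i j * Xf j)) (PP M W i)"
  proof (rule small_add)
    show "small (M i i * PP M W i) (PP M W i)"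
      by (rule small_mult1[OF Msmall]) (use i1 in auto)
    show "small (\<Sum>j\<in>W - {i}. M i j * Xf j) (PP M W i)"
    proof (rule sum_small_bound)
      fix j assume jW: "j \<in> W - {i}"
      then have "j < n" using W by auto
      then have "small (M i j * Xf j) (Xf j)" by (intro small_mult1[OF Msmall]) (use i1 in auto)
      then show "small (M i j * Xf j) (PP M W i)" using Xf[OF jW] small_mle_trans by blast
    qed
  qed
  then have "PP M W i + (M i i * PP M W i + (\<Sum>j\<in>W - {i}. M i j * Xf j)) = PP M W i"
    by (rule small_absorb)
  then show ?thesis using e by simp
qed

lemma PP_star:
  assumes "i \<in> {1..<n}"
  shows "PP M {1..<n} i = kleene_star n M i 0"
proof -
  define z where "z = (\<lambda>i. if i = 0 then 1 else PP M {1..<n} i)"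
  have spl: "(\<Sum>j<n. f j) = f 0 + (\<Sum>j\<in>{1..<n}. f j)" for f :: "nat \<Rightarrow> 'g smax"
  proof -
    have "{..<n} = insert 0 {1..<n}" using n_pos by auto
    then show ?thesis by simp
  qed
  have "\<forall>i\<in>{1..<n}. z i = kleene_star n M i 0"
  proof (rule uniq_fix[where R = "\<lambda>i a r. a = r" and M = M])
    show "{1..<n} \<subseteq> {..<n}" by auto
    fix i assume i: "i \<in> {1..<n}"
    show "kleene_star n M i 0 = (\<Sum>j<n. M i j * kleene_star n M j 0)"
      using star_fix i by auto
    have "z i = M i 0 + (\<Sum>j\<in>{1..<n}. M i j * PP M {1..<n} j)"
      using PP_fix[of "{1..<n}" i] i z_def by simp
    also have "\<dots> = (\<Sum>j<n. M i j * z j)"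
      unfolding spl z_def by simp
    finally show "z i = (\<Sum>j<n. M i j * z j)" .
  next
    fix j assume "j < n" "j \<notin> {1..<n}"
    then have "j = 0" by auto
    then show "z j = kleene_star n M j 0" by (simp add: z_def star00)
  next
    fix i j assume "i \<in> {1..<n}" "j < n"
    then show "small (M i j) 1" using Msmall by auto
  qed (auto)
  then show ?thesis using assms z_def by auto
qed

end


lemma small_sminus: "small (sminus a) b \<longleftrightarrow> small a (b::'g::linordered_ab_group_add smax)"
  unfolding small_def by (cases a) (auto simp: sdefs)

context kmat
begin

lemma detU_gamma:
  assumes g0: "\<gamma> \<noteq> 0"
    and Bdiag: "\<And>r. 0 < r \<Longrightarrow> r < n \<Longrightarrow> B r r = \<gamma>"
    and Boff: "\<And>r c. r < n \<Longrightarrow> c < n \<Longrightarrow> r \<noteq> c \<Longrightarrow> sminus (B r c) = \<gamma> * M r c"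
    and U: "U \<subseteq> {1..<n}"
  shows "detU B U = \<gamma> ^ card U"
proof (rule detU_dom)
  show "finite U" by (rule finite_subset[OF U]) simp
  show "\<gamma> \<noteq> 0" by (rule g0)
  fix r assume "r \<in> U" then show "B r r = \<gamma>" using U Bdiag by auto
next
  fix r c assume rc: "r \<in> U" "c \<in> U" "r \<noteq> c"
  then have rc': "r < n" "c < n" using U by auto
  have "small (M r c * \<gamma>) (1 * \<gamma>)"
    by (rule small_mult[OF Msmall[OF rc'] mle_refl]) (use rc in auto)
  then have "small (sminus (B r c)) \<gamma>" using Boff[OF rc' rc(3)] by (simp add: mult.commute)
  then show "small (B r c) \<gamma>" by (simp add: small_sminus)
qed

lemma Dsum_PP:
  assumes g0: "\<gamma> \<noteq> 0"
    and Bdiag: "\<And>r. 0 < r \<Longrightarrow> r < n \<Longrightarrow> B r r = \<gamma>"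
    and Boff: "\<And>r c. r < n \<Longrightarrow> c < n \<Longrightarrow> r \<noteq> c \<Longrightarrow> sminus (B r c) = \<gamma> * M r c"
    and W: "W \<subseteq> {1..<n}" and iW: "i \<in> W"
  shows "Dsum B (insert 0 W) i = \<gamma> ^ card W * PP M W i"
  using W iW
proof (induction "card W" arbitrary: W i rule: less_induct)
  case less
  have finW: "finite W" by (rule finite_subset[OF less.prems(1)]) simp
  have i0: "i \<noteq> 0" "i < n" using less.prems by auto
  have 0: "0 \<notin> W" using less.prems by auto
  define k where "k = card (W - {i})"
  have ck: "card W = Suc k" unfolding k_def using card_Suc_Diff1[OF finW less.prems(2)] by simp
  have eV: "insert 0 W - {i} = insert 0 (W - {i})" using i0 by auto
  have "Dsum B (insert 0 W) i = (\<Sum>j\<in>insert 0 (W - {i}). sminus (B i j) * Dsum B (insert 0 (W - {i})) j)"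
    using Dsum_rec[of "insert 0 W" i B] finW less.prems(2) i0 eV by simp
  also have "\<dots> = sminus (B i 0) * Dsum B (insert 0 (W - {i})) 0
      + (\<Sum>j\<in>W - {i}. sminus (B i j) * Dsum B (insert 0 (W - {i})) j)"
    using finW 0 by simp
  also have "Dsum B (insert 0 (W - {i})) 0 = \<gamma> ^ k"
  proof -
    have "Dsum B (insert 0 (W - {i})) 0 = detU B (insert 0 (W - {i}) - {0})"
      by (rule Dsum_0) (use finW in auto)
    also have "insert 0 (W - {i}) - {0} = W - {i}" using 0 by auto
    also have "detU B (W - {i}) = \<gamma> ^ card (W - {i})"
      by (rule detU_gamma[OF g0 Bdiag Boff]) (use less.prems(1) in auto)
    finally show ?thesis unfolding k_def .
  qed
  also have "(\<Sum>j\<in>W - {i}. sminus (B i j) * Dsum B (insert 0 (W - {i})) j)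
      = (\<Sum>j\<in>W - {i}. \<gamma> * M i j * (\<gamma> ^ k * PP M (W - {i}) j))"
  proof (rule sum.cong[OF refl])
    fix j assume jW: "j \<in> W - {i}"
    have "card (W - {i}) < card W" by (rule card_Diff1_less[OF finW less.prems(2)])
    then have "Dsum B (insert 0 (W - {i})) j = \<gamma> ^ k * PP M (W - {i}) j"
      using less.hyps[of "W - {i}" j] less.prems jW unfolding k_def by auto
    moreover have "sminus (B i j) = \<gamma> * M i j"
    proof -
      have "j < n" "i \<noteq> j" using jW less.prems(1) by auto
      then show ?thesis using Boff[of i j] i0 by simp
    qed
    ultimately show "sminus (B i j) * Dsum B (insert 0 (W - {i})) j = \<gamma> * M i j * (\<gamma> ^ k * PP M (W - {i}) j)"
      by simp
  qed
  also have "sminus (B i 0) = \<gamma> * M i 0" using Boff[of i 0] i0 n_pos by auto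
  finally have "Dsum B (insert 0 W) i = \<gamma> ^ Suc k * (M i 0 + (\<Sum>j\<in>W - {i}. M i j * PP M (W - {i}) j))"
    by (simp add: distrib_left sum_distrib_left ac_simps)
  then show ?case by (subst PP_rec[OF finW less.prems(2)]) (simp add: ck)
qed

end


lemma spreceq_Pos: "spreceq (Pos a) (Pos b) \<Longrightarrow> (a::'g::linordered_ab_group_add) \<le> b"
  unfolding spreceq_def sdefs by (auto split: if_splits)

lemma sprec_Pos: "sprec (Pos a) (Pos b) \<Longrightarrow> (a::'g::linordered_ab_group_add) < b"
  unfolding sprec_def spreceq_def sdefs by (auto split: if_splits)

lemma sless0_Pos: "sless 0 (x::'g::linordered_ab_group_add smax) \<Longrightarrow> x = Pos (smod x)"
  unfolding sless_def positive_def by (cases x) (auto simp: sdefs)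

lemma small_scale: "x = 0 \<or> smod x < c \<Longrightarrow> small (Pos (- c) * x) (1::'g::linordered_ab_group_add smax)"
  unfolding small_def by (cases x) (auto simp: sdefs algebra_simps)

lemma half_lt: "(m::'g::linordered_ab_group_add) + m < a + b \<Longrightarrow> a \<le> c \<Longrightarrow> b \<le> c \<Longrightarrow> m < c"
proof (rule ccontr)
  assume h: "m + m < a + b" "a \<le> c" "b \<le> c" "\<not> m < c"
  then have "a + b \<le> m + m" using add_mono[of a m b m] by auto
  then show False using h(1) by simp
qed

lemma offdiag_bound:
  assumes "signed x" "sless (x^2) (Pos a * Pos b)" "a \<le> c" "(b::'g::linordered_ab_group_add) \<le> c"
  shows "x = 0 \<or> smod x < c"
proof (cases x)
  case (Pos m)
  then have "m + m < a + b" using assms(2) unfolding sless_def positive_def power2_eq_square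
    by (auto simp: sdefs split: if_splits)
  then show ?thesis using half_lt assms Pos by auto
next
  case (Neg m)
  then have "m + m < a + b" using assms(2) unfolding sless_def positive_def power2_eq_square
    by (auto simp: sdefs split: if_splits)
  then show ?thesis using half_lt assms Neg by auto
qed (use assms(1) in \<open>auto simp: signed_def sdefs\<close>)

lemma Pos_pow: "\<exists>h. (Pos a :: 'g::linordered_ab_group_add smax) ^ k = Pos h"
  by (induction k) (auto simp: sdefs)

theorem theorem5p11:
  fixes A :: "'g::linordered_ab_group_add smat" and n :: nat
  assumes divisible: "\<And>(x::'g) (m::nat). 0 < m \<Longrightarrow> \<exists>y. (\<Sum>i<m. y) = x"
    and n_pos: "1 \<le> n"
    and tpd: "TPD n A"
    and ordered: "\<forall>i. Suc i < n \<longrightarrow> spreceq (A (Suc i) (Suc i)) (A i i)"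
    and simple: "1 < n \<longrightarrow> sprec (A 1 1) (A 0 0)"
  defines "\<gamma> \<equiv> A 0 0"
    and "v1 \<equiv> (\<lambda>i. sadj n (smat_minus (smat_scale (A 0 0) smat_id) A) i 0)"
  shows "kleene_converges n (smat_scale (sinv \<gamma>) A)
       \<and> (\<forall>i<n. v1 i = \<gamma> ^ (n - 1) * kleene_star n (smat_scale (sinv \<gamma>) A) i 0)
       \<and> (\<forall>i<n. smat_vec n A v1 i = \<gamma> * v1 i)
       \<and> ((\<forall>i<n. signed (v1 i)) \<longrightarrow>
            is_eigenvector n A \<gamma> v1 \<and> is_strong_eigenvector n A \<gamma> v1 \<and>
            (\<forall>w. is_eigenvector n A \<gamma> w \<longrightarrow>
                 (\<exists>c. signed c \<and> c \<noteq> 0 \<and> (\<forall>i<n. w i = c * v1 i))))"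
proof -
  define d where "d i = smod (A i i)" for i
  have dA: "A i i = Pos (d i)" if "i < n" for i
    using tpd that sless0_Pos unfolding TPD_def d_def by blast
  have ddec: "d (Suc i) \<le> d i" if "Suc i < n" for i
  proof -
    have "spreceq (A (Suc i) (Suc i)) (A i i)" using ordered that by blast
    then have "spreceq (Pos (d (Suc i))) (Pos (d i))" using dA[of i] dA[of "Suc i"] that by simp
    then show ?thesis by (rule spreceq_Pos)
  qed
  have dlt: "d i < d 0" if "0 < i" "i < n" for i
  proof -
    have n1: "1 < n" using that by simp
    have d10: "d 1 < d 0" using simple n1 dA[of 0] dA[of 1] sprec_Pos by auto
    have "d i \<le> d 1" using that
    proof (induction i)
      case 0 then show ?case by simp
    next
      case (Suc k)
      show ?case
      proof (cases "k = 0")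
        case True then show ?thesis by simp
      next
        case False
        then have "d k \<le> d 1" using Suc by simp
        then show ?thesis using ddec[of k] Suc.prems by simp
      qed
    qed
    then show ?thesis using d10 by simp
  qed
  have dle: "d i \<le> d 0" if "i < n" for i
    using dlt[of i] that by (cases "i = 0") auto
  have g: "\<gamma> = Pos (d 0)" using dA[of 0] n_pos unfolding \<gamma>_def by simp
  define M where "M = smat_scale (sinv \<gamma>) A"
  have Mij: "M i j = Pos (- d 0) * A i j" for i j unfolding M_def smat_scale_def g by simp
  have M00: "M 0 0 = 1" using dA[of 0] n_pos unfolding Mij by (simp add: sdefs)
  have Msmall: "small (M i j) 1" if ij: "i < n" "j < n" "(i, j) \<noteq> (0, 0)" for i j
  proof (cases "i = j")
    case True
    then have "0 < i" using ij by auto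
    then show ?thesis unfolding Mij using dA[of i] dlt[of i] ij True by (intro small_scale) simp
  next
    case False
    have "signed (A i j)" "sless ((A i j)^2) (A i i * A j j)" using tpd ij False unfolding TPD_def by auto
    then have "A i j = 0 \<or> smod (A i j) < d 0"
      using offdiag_bound[of "A i j" "d i" "d j" "d 0"] dA[of i] dA[of j] dle[of i] dle[of j] ij by auto
    then show ?thesis unfolding Mij by (rule small_scale)
  qed
  interpret K: kmat n M
    by unfold_locales (use n_pos M00 Msmall in auto)
  have g0: "\<gamma> \<noteq> 0" unfolding g by (simp add: sdefs)
  have AgM: "A i j = \<gamma> * M i j" for i j
  proof -
    have "\<gamma> * M i j = (Pos (d 0) * Pos (- d 0)) * A i j" unfolding Mij g by (simp add: mult.assoc)
    also have "Pos (d 0) * Pos (- d 0) = (1::'g smax)" by (simp add: sdefs)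
    finally show ?thesis by simp
  qed
  define B where "B = smat_minus (smat_scale (A 0 0) smat_id) A"
  have Bdiag: "B r r = \<gamma>" if "0 < r" "r < n" for r
  proof -
    have "B r r = Pos (d 0) + sminus (Pos (d r))"
      unfolding B_def smat_minus_def smat_scale_def smat_id_def using dA[of r] dA[of 0] that by simp
    then show ?thesis using dlt[OF that] g by (simp add: sdefs)
  qed
  have Boff: "sminus (B r c) = \<gamma> * M r c" if "r < n" "c < n" "r \<noteq> c" for r c
    unfolding B_def smat_minus_def smat_scale_def smat_id_def using that AgM by simp
  have v1D: "v1 i = Dsum B {..<n} i" if "i < n" for i
    unfolding v1_def sadj_def B_def[symmetric] using minor_Dsum[OF n_pos that] by simp
  have eV: "{..<n} = insert 0 {1..<n}" using n_pos by auto
  have S: "kleene_star n (smat_scale (sinv \<gamma>) A) = kleene_star n M" unfolding M_def ..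
  obtain h where h: "\<gamma> ^ (n - 1) = Pos h" using Pos_pow g by metis
  have v1S: "v1 i = \<gamma> ^ (n - 1) * kleene_star n M i 0" if i: "i < n" for i
  proof (cases "i = 0")
    case True
    have "v1 0 = detU B ({..<n} - {0})"
      using v1D[of 0] n_pos Dsum_0[of "{..<n}" B] by simp
    also have "{..<n} - {0} = {1..<n}" by auto
    also have "detU B {1..<n} = \<gamma> ^ card {1..<n}"
      by (rule K.detU_gamma[OF g0 Bdiag Boff]) auto
    finally show ?thesis using True K.star00 by simp
  next
    case False
    have "v1 i = Dsum B (insert 0 {1..<n}) i" using v1D[OF i] eV by simp
    also have "\<dots> = \<gamma> ^ card {1..<n} * PP M {1..<n} i"
      by (rule K.Dsum_PP[OF g0 Bdiag Boff]) (use i False in auto)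
    also have "PP M {1..<n} i = kleene_star n M i 0"
      by (rule K.PP_star) (use i False in auto)
    finally show ?thesis by simp
  qed
  have eig: "smat_vec n A v1 i = \<gamma> * v1 i" if i: "i < n" for i
  proof -
    have "smat_vec n A v1 i = (\<Sum>j<n. (\<gamma> * \<gamma> ^ (n - 1)) * (M i j * kleene_star n M j 0))"
      unfolding smat_vec_def by (rule sum.cong[OF refl]) (simp add: AgM v1S ac_simps)
    also have "\<dots> = (\<gamma> * \<gamma> ^ (n - 1)) * kleene_star n M i 0"
      by (simp add: sum_distrib_left[symmetric] K.star_col_eigen[OF i])
    also have "\<dots> = \<gamma> * v1 i" using v1S[OF i] by (simp add: mult.assoc)
    finally show ?thesis .
  qed
  have part4: "(\<forall>w. is_eigenvector n A \<gamma> w \<longrightarrow> (\<exists>c. signed c \<and> c \<noteq> 0 \<and> (\<forall>i<n. w i = c * v1 i)))"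
    if sg: "\<forall>i<n. signed (v1 i)"
  proof (intro allI impI)
    fix w assume ev: "is_eigenvector n A \<gamma> w"
    have wsg: "signed (w i)" if "i < n" for i using ev that unfolding is_eigenvector_def is_svec_def by auto
    have wne: "\<exists>i<n. w i \<noteq> 0" using ev unfolding is_eigenvector_def is_svec_def by auto
    have wnab: "nabla (smat_vec n A w i) (\<gamma> * w i)" if "i < n" for i
      using ev that unfolding is_eigenvector_def by auto
    have Ssg: "signed (kleene_star n M i 0)" if "i < n" for i
      using sg that v1S h signed_Pos_mult by metis
    define y where "y i = w 0 * kleene_star n M i 0" for i
    have "\<forall>i\<in>{1..<n}. w i = y i"
    proof (rule uniq_fix[where R = "\<lambda>i a r. signed a \<and> nabla a r" and M = M])
      show "{1..<n} \<subseteq> {..<n}" by auto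
    next
      fix i assume i: "i \<in> {1..<n}"
      show "y i = (\<Sum>j<n. M i j * y j)"
        unfolding y_def using K.star_fix[of i] i by (simp add: sum_distrib_left ac_simps)
      have "nabla (sinv \<gamma> * smat_vec n A w i) (sinv \<gamma> * (\<gamma> * w i))"
        using nabla_mult wnab i by auto
      moreover have "sinv \<gamma> * smat_vec n A w i = (\<Sum>j<n. M i j * w j)"
        unfolding smat_vec_def M_def smat_scale_def by (simp add: sum_distrib_left mult.assoc)
      moreover have "sinv \<gamma> * (\<gamma> * w i) = w i"
      proof -
        have "sinv \<gamma> * (\<gamma> * w i) = (Pos (- d 0) * Pos (d 0)) * w i" unfolding g by (simp add: mult.assoc)
        also have "Pos (- d 0) * Pos (d 0) = (1::'g smax)" by (simp add: sdefs)
        finally show ?thesis by simp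
      qed
      ultimately show "signed (w i) \<and> nabla (w i) (\<Sum>j<n. M i j * w j)"
        using wsg i nabla_sym by auto
    next
      fix j assume "j < n" "j \<notin> {1..<n}"
      then have "j = 0" by auto
      then show "w j = y j" by (simp add: y_def K.star00)
    next
      fix i j assume "i \<in> {1..<n}" "j < n"
      then show "small (M i j) 1" using Msmall by auto
    next
      fix i r assume "i \<in> {1..<n}" "signed (w i) \<and> nabla (w i) r" "w i \<noteq> 0"
      then show "mle (w i) r" using nabla_signed_mle by blast
    next
      fix i assume i: "i \<in> {1..<n}" "signed (w i) \<and> nabla (w i) (y i)"
      have "signed (y i)" unfolding y_def using signed_mult wsg Ssg i n_pos by auto
      then show "w i = y i" using nabla_signed_eq i by blast
    qed
    then have wy: "w i = w 0 * kleene_star n M i 0" if "i < n" for i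
      using that K.star00 y_def by (cases "i = 0") auto
    have w0: "w 0 \<noteq> 0" using wne wy by fastforce
    define c where "c = w 0 * Pos (- h)"
    have "signed c" unfolding c_def using wsg[of 0] n_pos signed_mult by (auto simp: signed_def)
    moreover have "c \<noteq> 0"
    proof -
      have "Pos (- h) \<noteq> (0::'g smax)" by (simp add: sdefs)
      then show ?thesis unfolding c_def using w0 by (simp add: mult_eq_0_iff)
    qed
    moreover have "w i = c * v1 i" if "i < n" for i
    proof -
      have "c * v1 i = w 0 * (Pos (- h) * Pos h) * kleene_star n M i 0"
        unfolding c_def v1S[OF that] h by (simp add: ac_simps)
      also have "Pos (- h) * Pos h = (1::'g smax)" by (simp add: sdefs)
      finally show ?thesis using wy[OF that] by simp
    qed
    ultimately show "\<exists>c. signed c \<and> c \<noteq> 0 \<and> (\<forall>i<n. w i = c * v1 i)" by blast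
  qed
  have v10: "v1 0 \<noteq> 0" using v1S[of 0] n_pos h K.star00 by (simp add: sdefs)
  show ?thesis
  proof (intro conjI impI)
    show "kleene_converges n (smat_scale (sinv \<gamma>) A)" using K.converges unfolding M_def .
    show "\<forall>i<n. v1 i = \<gamma> ^ (n - 1) * kleene_star n (smat_scale (sinv \<gamma>) A) i 0"
      using v1S unfolding S by blast
    show "\<forall>i<n. smat_vec n A v1 i = \<gamma> * v1 i" using eig by blast
    assume sg: "\<forall>i<n. signed (v1 i)"
    have sv: "is_svec n v1" unfolding is_svec_def
    proof
      show "\<forall>i<n. signed (v1 i)" by (rule sg)
      show "\<exists>i<n. v1 i \<noteq> 0" using v10 n_pos by (intro exI[of _ 0]) simp
    qed
    show "is_eigenvector n A \<gamma> v1" unfolding is_eigenvector_def using sv eig by (simp add: nabla_refl)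
    show "is_strong_eigenvector n A \<gamma> v1" unfolding is_strong_eigenvector_def using sv eig by simp
    show "\<forall>w. is_eigenvector n A \<gamma> w \<longrightarrow> (\<exists>c. signed c \<and> c \<noteq> 0 \<and> (\<forall>i<n. w i = c * v1 i))"
      using part4[OF sg] .
  qed
qed


end
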